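(* Fix a horizon $T\in\mathbb{N}$, matrices $A_0,\dots,A_{T}\in\mathbb{R}^{n\times n}$, a symmetric positive definite noise covariance $\mathcal{W}\in\mathbb{R}^{n\times n}$, a symmetric positive definite initial covariance $\Sigma_0$, and for each $t=0,\dots,T$ sets $\mathsf{C}_t$ of real matrices with $n$ columns and $\mathsf{V}_t$ of symmetric positive definite matrices of compatible size. Let $\mathsf{R}_t=\{C_t^{\mathsf T}\mathcal{V}_t^{-1}C_t : C_t\in\mathsf{C}_t,\ \mathcal{V}_t\in\mathsf{V}_t\}$ and $h_t(M)=A_{t-1}MA_{t-1}^{\mathsf T}+\mathcal{W}$. Problem (D) (sensor design): minimize $\sum_{t=0}^T\mathrm{tr}(P_t)$ over $\{P_t,Q_t,Q_{t|t-1},R_t,C_t,\mathcal{V}_t\}_{t=0}^T$ subject to, for all $t$: $P_t=Q_t^{-1}$, $Q_t=Q_{t|t-1}+R_t$, $Q_{t|t-1}=(h_t(P_{t-1}))^{-1}$ for $t\ge1$, $Q_{0|-1}=\Sigma_0^{-1}$, $R_t=C_t^{\mathsf T}\mathcal{V}_t^{-1}C_t$, $C_t\in\mathsf{C}_t$, $\mathcal{V}_t\in\mathsf{V}_t$. Problem (R) (relaxation): minimize $\sum_{t=0}^T\mathrm{tr}(P_t)$ over $\{P_t,Q_t,Q_{t|t-1},R_t\}_{t=0}^T$ subject to, for all $t$: $Q_t=Q_{t|t-1}+R_t$, $\begin{bmatrix}P_t & I\\ I & Q_t\end{bmatrix}\succeq0$, for $t\ge1$: $\begin{bmatrix}\mathcal{W}^{-1}-Q_{t|t-1}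 & \mathcal{W}^{-1}A_{t-1}\\ A_{t-1}^{\mathsf T}\mathcal{W}^{-1} & Q_{t-1}+A_{t-1}^{\mathsf T}\mathcal{W}^{-1}A_{t-1}\end{bmatrix}\succeq0$, $R_t\in\mathsf{R}_t$, and $Q_{0|-1}=\Sigma_0^{-1}$. Then an optimal solution of Problem (R) is also an optimal solution of Problem (D), and vice versa.
   Context: Problem (D) is the sensor design problem for the linear system $X_{t+1}=A_tX_t+W_t$, $W_t\sim\mathcal N(0,\mathcal W)$ i.i.d., $X_0\sim\mathcal N(\mu_0,\Sigma_0)$, with a designed sensor $Y_t=C_tX_t+V_t$, $V_t\sim\mathcal N(0,\mathcal V_t)$; $P_t$ is the Kalman filter error covariance and $Q_t=P_t^{-1}$, $Q_{t|t-1}$ are information matrices. Problem (R) replaces $P_t=Q_t^{-1}$ by $P_t\succeq Q_t^{-1}$ and $Q_{t|t-1}=(h_t(P_{t-1}))^{-1}$ by $Q_{t|t-1}\preceq(h_t(Q_{t-1}^{-1}))^{-1}$, written as linear matrix inequalities via Schur complements. *)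

theory Defs
  imports "Jordan_Normal_Form.Matrix"
begin

definition mtrace :: "real mat \<Rightarrow> real" where
  "mtrace M = (\<Sum>i<dim_row M. M $$ (i, i))"

(* inverse of a square matrix (meaningful when the matrix is invertible) *)
definition minv :: "real mat \<Rightarrow> real mat" where
  "minv M = (THE B. B \<in> carrier_mat (dim_row M) (dim_row M) \<and> M * B = 1\<^sub>m (dim_row M) \<and> B * M = 1\<^sub>m (dim_row M))"

definition psd :: "real mat \<Rightarrow> bool" where
  "psd M \<longleftrightarrow> M \<in> carrier_mat (dim_row M) (dim_row M) \<and> M\<^sup>T = M \<and>
     (\<forall>x \<in> carrier_vec (dim_row M). 0 \<le> x \<bullet> (M *\<^sub>v x))"

definition pd :: "real mat \<Rightarrow> bool" where
  "pd M \<longleftrightarrow> M \<in> carrier_mat (dim_row M) (dim_row M) \<and> M\<^sup>T = M \<and>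
     (\<forall>x \<in> carrier_vec (dim_row M). x \<noteq> 0\<^sub>v (dim_row M) \<longrightarrow> 0 < x \<bullet> (M *\<^sub>v x))"

definition is_inv :: "nat \<Rightarrow> real mat \<Rightarrow> real mat \<Rightarrow> bool" where
  "is_inv n M N \<longleftrightarrow> M \<in> carrier_mat n n \<and> N \<in> carrier_mat n n \<and>
     M * N = 1\<^sub>m n \<and> N * M = 1\<^sub>m n"

definition hmap :: "(nat \<Rightarrow> real mat) \<Rightarrow> real mat \<Rightarrow> nat \<Rightarrow> real mat \<Rightarrow> real mat" where
  "hmap A W t M = A (t - 1) * M * (A (t - 1))\<^sup>T + W"

definition Rset :: "(nat \<Rightarrow> real mat set) \<Rightarrow> (nat \<Rightarrow> real mat set) \<Rightarrow> nat \<Rightarrow> real mat set" where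
  "Rset Cs Vs t = {C\<^sup>T * minv V * C | C V. C \<in> Cs t \<and> V \<in> Vs t}"

definition cost :: "nat \<Rightarrow> (nat \<Rightarrow> real mat) \<Rightarrow> real" where
  "cost T P = (\<Sum>t\<le>T. mtrace (P t))"

definition feasD ::
  "nat \<Rightarrow> nat \<Rightarrow> (nat \<Rightarrow> real mat) \<Rightarrow> real mat \<Rightarrow> real mat \<Rightarrow>
   (nat \<Rightarrow> real mat set) \<Rightarrow> (nat \<Rightarrow> real mat set) \<Rightarrow>
   (nat \<Rightarrow> real mat) \<Rightarrow> (nat \<Rightarrow> real mat) \<Rightarrow> (nat \<Rightarrow> real mat) \<Rightarrow> (nat \<Rightarrow> real mat) \<Rightarrow>
   (nat \<Rightarrow> real mat) \<Rightarrow> (nat \<Rightarrow> real mat) \<Rightarrow> bool" where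
  "feasD n T A W \<Sigma>0 Cs Vs P Q Qp R C V \<longleftrightarrow>
     (\<forall>t\<le>T. P t \<in> carrier_mat n n \<and> Q t \<in> carrier_mat n n \<and> Qp t \<in> carrier_mat n n
         \<and> R t \<in> carrier_mat n n
         \<and> is_inv n (P t) (Q t)
         \<and> Q t = Qp t + R t
         \<and> (1 \<le> t \<longrightarrow> is_inv n (Qp t) (hmap A W t (P (t - 1))))
         \<and> R t = (C t)\<^sup>T * minv (V t) * C t
         \<and> C t \<in> Cs t \<and> V t \<in> Vs t)
     \<and> is_inv n (Qp 0) \<Sigma>0"

definition feasR ::
  "nat \<Rightarrow> nat \<Rightarrow> (nat \<Rightarrow> real mat) \<Rightarrow> real mat \<Rightarrow> real mat \<Rightarrow>
   (nat \<Rightarrow> real mat set) \<Rightarrow> (nat \<Rightarrow> real mat set) \<Rightarrow>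
   (nat \<Rightarrow> real mat) \<Rightarrow> (nat \<Rightarrow> real mat) \<Rightarrow> (nat \<Rightarrow> real mat) \<Rightarrow> (nat \<Rightarrow> real mat) \<Rightarrow> bool" where
  "feasR n T A W \<Sigma>0 Cs Vs P Q Qp R \<longleftrightarrow>
     (\<forall>t\<le>T. P t \<in> carrier_mat n n \<and> Q t \<in> carrier_mat n n \<and> Qp t \<in> carrier_mat n n
         \<and> R t \<in> carrier_mat n n
         \<and> Q t = Qp t + R t
         \<and> psd (four_block_mat (P t) (1\<^sub>m n) (1\<^sub>m n) (Q t))
         \<and> (1 \<le> t \<longrightarrow>
              psd (four_block_mat (minv W - Qp t) (minv W * A (t - 1))
                     ((A (t - 1))\<^sup>T * minv W) (Q (t - 1) + (A (t - 1))\<^sup>T * minv W * A (t - 1))))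
         \<and> R t \<in> Rset Cs Vs t)
     \<and> is_inv n (Qp 0) \<Sigma>0"

definition optD where
  "optD n T A W \<Sigma>0 Cs Vs P Q Qp R C V \<longleftrightarrow>
     feasD n T A W \<Sigma>0 Cs Vs P Q Qp R C V \<and>
     (\<forall>P' Q' Qp' R' C' V'. feasD n T A W \<Sigma>0 Cs Vs P' Q' Qp' R' C' V' \<longrightarrow> cost T P \<le> cost T P')"

definition optR where
  "optR n T A W \<Sigma>0 Cs Vs P Q Qp R \<longleftrightarrow>
     feasR n T A W \<Sigma>0 Cs Vs P Q Qp R \<and>
     (\<forall>P' Q' Qp' R'. feasR n T A W \<Sigma>0 Cs Vs P' Q' Qp' R' \<longrightarrow> cost T P \<le> cost T P')"

end

theory Submission
  imports Defs "Jordan_Normal_Form.Determinant"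
begin

lemma pd_is_inv: fixes M :: "real mat" assumes M: "M \<in> carrier_mat n n" and p: "pd M" shows "\<exists>N. is_inv n M N"
proof -
  have "det M \<noteq> 0"
  proof
    assume "det M = 0"
    then obtain v where v: "v \<in> carrier_vec n" "v \<noteq> 0\<^sub>v n" "M *\<^sub>v v = 0\<^sub>v n"
      using det_0_iff_vec_prod_zero[OF M] by auto
    have "0 < v \<bullet> (M *\<^sub>v v)" using p M v unfolding pd_def by auto
    then show False using v by simp
  qed
  from det_non_zero_imp_unit[OF M this, of undefined]
  show ?thesis unfolding Units_def ring_mat_def is_inv_def using M by auto
qed

lemma is_inv_unique: fixes M :: "real mat" assumes "is_inv n M N" "is_inv n M N'" shows "N = N'"
proof -
  have c: "M \<in> carrier_mat n n" "N \<in> carrier_mat n n" "N' \<in> carrier_mat n n"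
   and e: "M * N = 1\<^sub>m n" "N * M = 1\<^sub>m n" "M * N' = 1\<^sub>m n" "N' * M = 1\<^sub>m n"
    using assms unfolding is_inv_def by auto
  have "N = N * (M * N')" using c e by simp
  also have "\<dots> = (N * M) * N'" using c by (simp add: assoc_mult_mat)
  also have "\<dots> = N'" using c e by simp
  finally show ?thesis .
qed

lemma minv_eq: fixes M :: "real mat" assumes "is_inv n M N" shows "minv M = N"
proof -
  have d: "dim_row M = n" using assms unfolding is_inv_def by auto
  show ?thesis unfolding minv_def d
  proof (rule the_equality)
    show "N \<in> carrier_mat n n \<and> M * N = 1\<^sub>m n \<and> N * M = 1\<^sub>m n" using assms unfolding is_inv_def by auto
    fix B assume "B \<in> carrier_mat n n \<and> M * B = 1\<^sub>m n \<and> B * M = 1\<^sub>m n"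
    then have "is_inv n M B" using assms unfolding is_inv_def by auto
    then show "B = N" using is_inv_unique assms by blast
  qed
qed

lemma is_inv_sym: fixes M :: "real mat" assumes "is_inv n M N" "M\<^sup>T = M" shows "N\<^sup>T = N"
proof -
  have c: "M \<in> carrier_mat n n" "N \<in> carrier_mat n n"
   and e: "M * N = 1\<^sub>m n" "N * M = 1\<^sub>m n" using assms unfolding is_inv_def by auto
  have "M * N\<^sup>T = (N * M)\<^sup>T" using c assms(2) by (metis transpose_mult)
  then have 1: "M * N\<^sup>T = 1\<^sub>m n" using e by simp
  have "N\<^sup>T * M = (M * N)\<^sup>T" using c assms(2) by (metis transpose_mult)
  then have 2: "N\<^sup>T * M = 1\<^sub>m n" using e by simp
  have "is_inv n M (N\<^sup>T)" using 1 2 c unfolding is_inv_def by auto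
  then show ?thesis using is_inv_unique assms(1) by blast
qed

lemma is_inv_swap: "is_inv n M N \<Longrightarrow> is_inv n N M" unfolding is_inv_def by auto

lemma sym_bil: fixes M :: "real mat" assumes M: "M \<in> carrier_mat n n" "M\<^sup>T = M" and u: "u \<in> carrier_vec n" and v: "v \<in> carrier_vec n"
  shows "u \<bullet> (M *\<^sub>v v) = v \<bullet> (M *\<^sub>v u)"
proof -
  have "u \<bullet> (M *\<^sub>v v) = (M\<^sup>T *\<^sub>v u) \<bullet> v" using transpose_vec_mult_scalar[OF M(1) v u] by simp
  also have "\<dots> = v \<bullet> (M *\<^sub>v u)" using M u v by (metis comm_scalar_prod mult_mat_vec_carrier)
  finally show ?thesis .
qed

lemma quad_add: fixes M :: "real mat" assumes M: "M \<in> carrier_mat n n" "M\<^sup>T = M" and u: "u \<in> carrier_vec n" and v: "v \<in> carrier_vec n"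
  shows "(u + v) \<bullet> (M *\<^sub>v (u + v)) = u \<bullet> (M *\<^sub>v u) + 2 * (u \<bullet> (M *\<^sub>v v)) + v \<bullet> (M *\<^sub>v v)"
proof -
  have "(u + v) \<bullet> (M *\<^sub>v (u + v)) = (u + v) \<bullet> (M *\<^sub>v u + M *\<^sub>v v)"
    using M u v by (simp add: mult_add_distrib_mat_vec)
  also have "\<dots> = u \<bullet> (M *\<^sub>v u) + u \<bullet> (M *\<^sub>v v) + (v \<bullet> (M *\<^sub>v u) + v \<bullet> (M *\<^sub>v v))"
    using M u v by (simp add: add_scalar_prod_distrib scalar_prod_add_distrib)
  finally show ?thesis using sym_bil[OF M v u] by simp
qed

lemma quad_inv: fixes M :: "real mat" assumes "is_inv n M N" "M\<^sup>T = M" "x \<in> carrier_vec n"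
  shows "x \<bullet> (N *\<^sub>v x) = (N *\<^sub>v x) \<bullet> (M *\<^sub>v (N *\<^sub>v x))"
proof -
  have c: "M \<in> carrier_mat n n" "N \<in> carrier_mat n n"
   and e: "M * N = 1\<^sub>m n" "N * M = 1\<^sub>m n" using assms unfolding is_inv_def by auto
  have "M *\<^sub>v (N *\<^sub>v x) = x" using c e assms(3) by (metis assoc_mult_mat_vec one_mult_mat_vec)
  then show ?thesis using assms(3) c by (simp add: comm_scalar_prod[of _ n])
qed


lemma quad_sub: fixes M :: "real mat" assumes M: "M \<in> carrier_mat n n" "M\<^sup>T = M" and u: "u \<in> carrier_vec n" and v: "v \<in> carrier_vec n"
  shows "(u - v) \<bullet> (M *\<^sub>v (u - v)) = u \<bullet> (M *\<^sub>v u) - 2 * (u \<bullet> (M *\<^sub>v v)) + v \<bullet> (M *\<^sub>v v)"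
proof -
  have "(u - v) \<bullet> (M *\<^sub>v (u - v)) = (u - v) \<bullet> (M *\<^sub>v u - M *\<^sub>v v)"
    using M u v by (simp add: mult_minus_distrib_mat_vec)
  also have "\<dots> = u \<bullet> (M *\<^sub>v u) - u \<bullet> (M *\<^sub>v v) - (v \<bullet> (M *\<^sub>v u) - v \<bullet> (M *\<^sub>v v))"
    using M u v by (simp add: minus_scalar_prod_distrib[of _ n] scalar_prod_minus_distrib[of _ n])
  finally show ?thesis using sym_bil[OF M v u] by simp
qed

lemma transp_dot: fixes A :: "real mat" assumes A: "A \<in> carrier_mat n n" and u: "u \<in> carrier_vec n" and y: "y \<in> carrier_vec n"
  shows "y \<bullet> (A\<^sup>T *\<^sub>v u) = (A *\<^sub>v y) \<bullet> u"
proof -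
  have "y \<bullet> (A\<^sup>T *\<^sub>v u) = (A\<^sup>T *\<^sub>v u) \<bullet> y" using A u y by (metis comm_scalar_prod mult_mat_vec_carrier transpose_carrier_mat)
  also have "\<dots> = u \<bullet> (A *\<^sub>v y)" using transpose_vec_mult_scalar[OF A y u] .
  also have "\<dots> = (A *\<^sub>v y) \<bullet> u" using A u y by (metis comm_scalar_prod mult_mat_vec_carrier)
  finally show ?thesis .
qed

lemma block_quad: fixes X :: "real mat" and x y :: "real vec"
  assumes c: "X \<in> carrier_mat n n" "Y \<in> carrier_mat n n" "Z \<in> carrier_mat n n" "U \<in> carrier_mat n n"
    and x: "x \<in> carrier_vec n" and y: "y \<in> carrier_vec n"
  shows "(x @\<^sub>v y) \<bullet> (four_block_mat X Y Z U *\<^sub>v (x @\<^sub>v y)) = x \<bullet> (X *\<^sub>v x + Y *\<^sub>v y) + y \<bullet> (Z *\<^sub>v x + U *\<^sub>v y)"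
  using c x y by (simp add: four_block_mat_mult_vec[OF c x y] scalar_prod_append[of _ n _ n])

lemma psd_block_use: fixes X :: "real mat"
  assumes c: "X \<in> carrier_mat n n" "Y \<in> carrier_mat n n" "Z \<in> carrier_mat n n" "U \<in> carrier_mat n n"
    and p: "psd (four_block_mat X Y Z U)"
  shows "X\<^sup>T = X" "U\<^sup>T = U"
    "\<And>x y. x \<in> carrier_vec n \<Longrightarrow> y \<in> carrier_vec n \<Longrightarrow> 0 \<le> x \<bullet> (X *\<^sub>v x + Y *\<^sub>v y) + y \<bullet> (Z *\<^sub>v x + U *\<^sub>v y)"
proof -
  let ?B = "four_block_mat X Y Z U"
  have d: "dim_row ?B = n + n" using c by simp
  have s: "?B\<^sup>T = ?B" using p unfolding psd_def by auto
  show "X\<^sup>T = X"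
  proof (rule eq_matI)
    fix i j assume ij: "i < dim_row X" "j < dim_col X"
    have "?B\<^sup>T $$ (i, j) = ?B $$ (i, j)" using s by simp
    then show "X\<^sup>T $$ (i, j) = X $$ (i, j)" using ij c by simp
  qed (use c in auto)
  show "U\<^sup>T = U"
  proof (rule eq_matI)
    fix i j assume ij: "i < dim_row U" "j < dim_col U"
    have "?B\<^sup>T $$ (n + i, n + j) = ?B $$ (n + i, n + j)" using s by simp
    then show "U\<^sup>T $$ (i, j) = U $$ (i, j)" using ij c by simp
  qed (use c in auto)
  fix x y :: "real vec" assume x: "x \<in> carrier_vec n" and y: "y \<in> carrier_vec n"
  have "0 \<le> (x @\<^sub>v y) \<bullet> (?B *\<^sub>v (x @\<^sub>v y))" using p x y d unfolding psd_def by auto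
  then show "0 \<le> x \<bullet> (X *\<^sub>v x + Y *\<^sub>v y) + y \<bullet> (Z *\<^sub>v x + U *\<^sub>v y)" using block_quad[OF c x y] by simp
qed

lemma psd_block_intro: fixes X :: "real mat"
  assumes c: "X \<in> carrier_mat n n" "Y \<in> carrier_mat n n" "Z \<in> carrier_mat n n" "U \<in> carrier_mat n n"
    and s: "X\<^sup>T = X" "U\<^sup>T = U" "Y\<^sup>T = Z"
    and q: "\<And>x y. x \<in> carrier_vec n \<Longrightarrow> y \<in> carrier_vec n \<Longrightarrow> 0 \<le> x \<bullet> (X *\<^sub>v x + Y *\<^sub>v y) + y \<bullet> (Z *\<^sub>v x + U *\<^sub>v y)"
  shows "psd (four_block_mat X Y Z U)"
proof -
  let ?B = "four_block_mat X Y Z U"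
  have d: "dim_row ?B = n + n" using c by simp
  have Zt: "Z\<^sup>T = Y" using s(3) by auto
  have "?B\<^sup>T = ?B" using c s Zt by (simp add: transpose_four_block_mat[OF c])
  moreover have "?B \<in> carrier_mat (n+n) (n+n)" using c by simp
  moreover have "0 \<le> v \<bullet> (?B *\<^sub>v v)" if v: "v \<in> carrier_vec (n + n)" for v
  proof -
    have "v = vec_first v n @\<^sub>v vec_last v n" using v by simp
    then show ?thesis using q[of "vec_first v n" "vec_last v n"] block_quad[OF c, of "vec_first v n" "vec_last v n"] by simp
  qed
  ultimately show ?thesis unfolding psd_def d by auto
qed

lemma inv_psd: fixes M :: "real mat" assumes i: "is_inv n M N" and s: "M\<^sup>T = M"
  and p: "\<And>x. x \<in> carrier_vec n \<Longrightarrow> 0 \<le> x \<bullet> (M *\<^sub>v x)" and x: "x \<in> carrier_vec n"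
  shows "0 \<le> x \<bullet> (N *\<^sub>v x)"
proof -
  have "N \<in> carrier_mat n n" using i unfolding is_inv_def by auto
  then show ?thesis using quad_inv[OF i s x] p[of "N *\<^sub>v x"] x by simp
qed

lemma inv_pd: fixes M :: "real mat" assumes i: "is_inv n M N" and s: "M\<^sup>T = M"
  and p: "\<And>x. x \<in> carrier_vec n \<Longrightarrow> x \<noteq> 0\<^sub>v n \<Longrightarrow> 0 < x \<bullet> (M *\<^sub>v x)" and x: "x \<in> carrier_vec n" and nz: "x \<noteq> 0\<^sub>v n"
  shows "0 < x \<bullet> (N *\<^sub>v x)"
proof -
  have c: "M \<in> carrier_mat n n" "N \<in> carrier_mat n n" and e: "M * N = 1\<^sub>m n" using i unfolding is_inv_def by auto
  have "M *\<^sub>v (N *\<^sub>v x) = x" using c e x by (metis assoc_mult_mat_vec one_mult_mat_vec)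
  have "N *\<^sub>v x \<noteq> 0\<^sub>v n"
  proof
    assume "N *\<^sub>v x = 0\<^sub>v n"
    then have "x = M *\<^sub>v 0\<^sub>v n" using \<open>M *\<^sub>v (N *\<^sub>v x) = x\<close> by metis
    also have "\<dots> = 0\<^sub>v n" using c by auto
    finally show False using nz by simp
  qed
  then show ?thesis using quad_inv[OF i s x] p[of "N *\<^sub>v x"] x c by simp
qed

lemma loewner_inv: fixes A :: "real mat"
  assumes iA: "is_inv n A Ai" and iB: "is_inv n B Bi" and sA: "A\<^sup>T = A" and sB: "B\<^sup>T = B"
    and pB: "\<And>x. x \<in> carrier_vec n \<Longrightarrow> 0 \<le> x \<bullet> (B *\<^sub>v x)"
    and le: "\<And>x. x \<in> carrier_vec n \<Longrightarrow> x \<bullet> (B *\<^sub>v x) \<le> x \<bullet> (A *\<^sub>v x)"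
    and x: "x \<in> carrier_vec n"
  shows "x \<bullet> (Ai *\<^sub>v x) \<le> x \<bullet> (Bi *\<^sub>v x)"
proof -
  have c: "A \<in> carrier_mat n n" "Ai \<in> carrier_mat n n" "B \<in> carrier_mat n n" "Bi \<in> carrier_mat n n"
    and e: "A * Ai = 1\<^sub>m n" "B * Bi = 1\<^sub>m n" using iA iB unfolding is_inv_def by auto
  define y where "y = Ai *\<^sub>v x"
  have y: "y \<in> carrier_vec n" using c x y_def by simp
  have bx: "Bi *\<^sub>v x \<in> carrier_vec n" using c x by simp
  have Ay: "A *\<^sub>v y = x" using c e x y_def by (metis assoc_mult_mat_vec one_mult_mat_vec)
  have BB: "B *\<^sub>v (Bi *\<^sub>v x) = x" using c e x by (metis assoc_mult_mat_vec one_mult_mat_vec)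
  have "0 \<le> (y - Bi *\<^sub>v x) \<bullet> (B *\<^sub>v (y - Bi *\<^sub>v x))" using pB y bx by simp
  also have "\<dots> = y \<bullet> (B *\<^sub>v y) - 2 * (y \<bullet> x) + x \<bullet> (Bi *\<^sub>v x)"
    using quad_sub[OF c(3) sB y bx] BB quad_inv[OF iB sB x] by simp
  finally have 1: "0 \<le> y \<bullet> (B *\<^sub>v y) - 2 * (y \<bullet> x) + x \<bullet> (Bi *\<^sub>v x)" .
  have 2: "y \<bullet> (B *\<^sub>v y) \<le> y \<bullet> x" using le[OF y] Ay by simp
  have 3: "y \<bullet> x = x \<bullet> (Ai *\<^sub>v x)" using y x y_def by (simp add: comm_scalar_prod[of _ n])
  show ?thesis using 1 2 3 by linarith
qed

lemma R_props: fixes C :: "real mat"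
  assumes C: "C \<in> carrier_mat m n" and V: "V \<in> carrier_mat m m" and pV: "pd V"
  shows "C\<^sup>T * minv V * C \<in> carrier_mat n n" "(C\<^sup>T * minv V * C)\<^sup>T = C\<^sup>T * minv V * C"
    "\<And>x. x \<in> carrier_vec n \<Longrightarrow> 0 \<le> x \<bullet> ((C\<^sup>T * minv V * C) *\<^sub>v x)"
proof -
  obtain N where iN: "is_inv m V N" using pd_is_inv[OF V pV] by auto
  have mN: "minv V = N" using minv_eq[OF iN] .
  have N: "N \<in> carrier_mat m m" using iN unfolding is_inv_def by auto
  have sV: "V\<^sup>T = V" using pV unfolding pd_def by auto
  have sN: "N\<^sup>T = N" using is_inv_sym[OF iN sV] .
  have pVq: "\<And>x. x \<in> carrier_vec m \<Longrightarrow> 0 \<le> x \<bullet> (V *\<^sub>v x)"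
  proof -
    fix x :: "real vec" assume x: "x \<in> carrier_vec m"
    show "0 \<le> x \<bullet> (V *\<^sub>v x)"
    proof (cases "x = 0\<^sub>v m")
      case True then show ?thesis using V by simp
    next
      case False then show ?thesis using pV x V unfolding pd_def by fastforce
    qed
  qed
  show "C\<^sup>T * minv V * C \<in> carrier_mat n n" using C N mN by simp
  have e1: "(C\<^sup>T * N * C)\<^sup>T = C\<^sup>T * (C\<^sup>T * N)\<^sup>T"
    by (rule trans[OF transpose_mult[of "C\<^sup>T * N" n m C n]]) (use C N in auto)
  have e2: "(C\<^sup>T * N)\<^sup>T = N\<^sup>T * C" using transpose_mult[of "C\<^sup>T" n m N m] C N by simp
  have e3: "C\<^sup>T * (N * C) = C\<^sup>T * N * C" using assoc_mult_mat[of "C\<^sup>T" n m N m C n] C N by simp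
  show "(C\<^sup>T * minv V * C)\<^sup>T = C\<^sup>T * minv V * C" using e1 e2 e3 mN sN by metis
  fix x :: "real vec" assume x: "x \<in> carrier_vec n"
  have f1: "(C\<^sup>T * N * C) *\<^sub>v x = C\<^sup>T *\<^sub>v (N *\<^sub>v (C *\<^sub>v x))"
  proof -
    have "(C\<^sup>T * N * C) *\<^sub>v x = C\<^sup>T *\<^sub>v ((N * C) *\<^sub>v x)"
      unfolding e3[symmetric] by (rule assoc_mult_mat_vec[of _ n m _ n]) (use C N x in auto)
    also have "(N * C) *\<^sub>v x = N *\<^sub>v (C *\<^sub>v x)" by (rule assoc_mult_mat_vec[of _ m m _ n]) (use C N x in auto)
    finally show ?thesis .
  qed
  let ?u = "N *\<^sub>v (C *\<^sub>v x)"
  have u: "?u \<in> carrier_vec m" using C N x by simp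
  have "x \<bullet> (C\<^sup>T *\<^sub>v ?u) = (C\<^sup>T *\<^sub>v ?u) \<bullet> x"
    by (rule comm_scalar_prod[of _ n]) (use C u x in auto)
  also have "\<dots> = ?u \<bullet> (C *\<^sub>v x)" by (rule transpose_vec_mult_scalar[OF C x u])
  also have "\<dots> = (C *\<^sub>v x) \<bullet> ?u" by (rule comm_scalar_prod[of _ m]) (use C u x in auto)
  finally have "x \<bullet> (C\<^sup>T *\<^sub>v ?u) = (C *\<^sub>v x) \<bullet> ?u" .
  then have "x \<bullet> ((C\<^sup>T * N * C) *\<^sub>v x) = (C *\<^sub>v x) \<bullet> (N *\<^sub>v (C *\<^sub>v x))" using f1 by simp
  moreover have "0 \<le> (C *\<^sub>v x) \<bullet> (N *\<^sub>v (C *\<^sub>v x))" using inv_psd[OF iN sV pVq] C x by simp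
  ultimately show "0 \<le> x \<bullet> ((C\<^sup>T * minv V * C) *\<^sub>v x)" using mN by simp
qed

lemma assoc3: fixes A :: "real mat" assumes "A \<in> carrier_mat n n" "B \<in> carrier_mat n n" "C \<in> carrier_mat n n" "l \<in> carrier_vec n"
  shows "(A * B * C) *\<^sub>v l = A *\<^sub>v (B *\<^sub>v (C *\<^sub>v l))"
proof -
  have "(A * B * C) *\<^sub>v l = (A * B) *\<^sub>v (C *\<^sub>v l)" by (rule assoc_mult_mat_vec[of _ n n]) (use assms in auto)
  also have "\<dots> = A *\<^sub>v (B *\<^sub>v (C *\<^sub>v l))" by (rule assoc_mult_mat_vec[of _ n n]) (use assms in auto)
  finally show ?thesis .
qed


lemma mult_uminus_vec: fixes A :: "real mat" assumes "A \<in> carrier_mat n n" "v \<in> carrier_vec n"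
  shows "A *\<^sub>v (- v) = - (A *\<^sub>v v)"
  by (rule eq_vecI) (use assms in auto)

lemma add_sub_cancel_vec: fixes a b :: "real vec" assumes "a \<in> carrier_vec n" "b \<in> carrier_vec n"
  shows "(a + b) - a = b"
  by (rule eq_vecI) (use assms in auto)

lemma quad_APA: fixes A :: "real mat" assumes A: "A \<in> carrier_mat n n" and P: "P \<in> carrier_mat n n"
  and l: "l \<in> carrier_vec n"
  shows "l \<bullet> ((A * P * A\<^sup>T) *\<^sub>v l) = (A\<^sup>T *\<^sub>v l) \<bullet> (P *\<^sub>v (A\<^sup>T *\<^sub>v l))"
proof -
  have "(A * P * A\<^sup>T) *\<^sub>v l = A *\<^sub>v (P *\<^sub>v (A\<^sup>T *\<^sub>v l))" using assoc3[OF A P _ l] A by simp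
  moreover have "l \<bullet> (A *\<^sub>v (P *\<^sub>v (A\<^sup>T *\<^sub>v l))) = (A\<^sup>T *\<^sub>v l) \<bullet> (P *\<^sub>v (A\<^sup>T *\<^sub>v l))"
    using transp_dot[of "A\<^sup>T" n "P *\<^sub>v (A\<^sup>T *\<^sub>v l)" l] A P l by simp
  ultimately show ?thesis by simp
qed

lemma lmi2_form: fixes A :: "real mat"
  assumes c: "Wi \<in> carrier_mat n n" "Qp \<in> carrier_mat n n" "Q \<in> carrier_mat n n" "A \<in> carrier_mat n n"
    and s: "Wi\<^sup>T = Wi" and x: "x \<in> carrier_vec n" and y: "y \<in> carrier_vec n"
  shows "x \<bullet> ((Wi - Qp) *\<^sub>v x + (Wi * A) *\<^sub>v y) + y \<bullet> ((A\<^sup>T * Wi) *\<^sub>v x + (Q + A\<^sup>T * Wi * A) *\<^sub>v y)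
       = (x + A *\<^sub>v y) \<bullet> (Wi *\<^sub>v (x + A *\<^sub>v y)) - x \<bullet> (Qp *\<^sub>v x) + y \<bullet> (Q *\<^sub>v y)"
proof -
  define a where "a = A *\<^sub>v y"
  have a: "a \<in> carrier_vec n" using a_def c y by simp
  have wx: "Wi *\<^sub>v x \<in> carrier_vec n" "Qp *\<^sub>v x \<in> carrier_vec n" "Wi *\<^sub>v a \<in> carrier_vec n" "Q *\<^sub>v y \<in> carrier_vec n"
    using c x a y by auto
  have e1: "(Wi - Qp) *\<^sub>v x = Wi *\<^sub>v x - Qp *\<^sub>v x" using c x by (simp add: minus_mult_distrib_mat_vec)
  have e2: "(Wi * A) *\<^sub>v y = Wi *\<^sub>v a" using c y a_def by simp
  have e3: "(A\<^sup>T * Wi) *\<^sub>v x = A\<^sup>T *\<^sub>v (Wi *\<^sub>v x)" using c x by simp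
  have e4: "(Q + A\<^sup>T * Wi * A) *\<^sub>v y = Q *\<^sub>v y + A\<^sup>T *\<^sub>v (Wi *\<^sub>v a)"
    using c y a_def assoc3[of "A\<^sup>T" n Wi A y] by (simp add: add_mult_distrib_mat_vec[of _ n n])
  have t1: "x \<bullet> (Wi *\<^sub>v x - Qp *\<^sub>v x + Wi *\<^sub>v a) = x \<bullet> (Wi *\<^sub>v x) - x \<bullet> (Qp *\<^sub>v x) + x \<bullet> (Wi *\<^sub>v a)"
    using x wx by (simp add: scalar_prod_add_distrib[of _ n] scalar_prod_minus_distrib[of _ n])
  have t2: "y \<bullet> (A\<^sup>T *\<^sub>v (Wi *\<^sub>v x) + (Q *\<^sub>v y + A\<^sup>T *\<^sub>v (Wi *\<^sub>v a))) = y \<bullet> (A\<^sup>T *\<^sub>v (Wi *\<^sub>v x)) + y \<bullet> (Q *\<^sub>v y) + y \<bullet> (A\<^sup>T *\<^sub>v (Wi *\<^sub>v a))"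
    using y wx c by (simp add: scalar_prod_add_distrib[of _ n])
  have t3: "y \<bullet> (A\<^sup>T *\<^sub>v (Wi *\<^sub>v x)) = x \<bullet> (Wi *\<^sub>v a)"
    using transp_dot[OF c(4) wx(1) y] sym_bil[OF c(1) s a x] a_def by simp
  have t4: "y \<bullet> (A\<^sup>T *\<^sub>v (Wi *\<^sub>v a)) = a \<bullet> (Wi *\<^sub>v a)"
    using transp_dot[OF c(4) wx(3) y] a_def by simp
  have q: "(x + a) \<bullet> (Wi *\<^sub>v (x + a)) = x \<bullet> (Wi *\<^sub>v x) + 2 * (x \<bullet> (Wi *\<^sub>v a)) + a \<bullet> (Wi *\<^sub>v a)"
    by (rule quad_add[OF c(1) s x a])
  show ?thesis unfolding e1 e2 e3 e4 t1 t2 t3 t4 a_def[symmetric] q by simp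
qed

lemma lb2: fixes A :: "real mat"
  assumes A: "A \<in> carrier_mat n n" and iW: "is_inv n W Wi" and sW: "W\<^sup>T = W"
    and pW: "\<And>v. v \<in> carrier_vec n \<Longrightarrow> 0 \<le> v \<bullet> (W *\<^sub>v v)"
    and iQ: "is_inv n Q P" and sQ: "Q\<^sup>T = Q" and pQ: "\<And>v. v \<in> carrier_vec n \<Longrightarrow> 0 \<le> v \<bullet> (Q *\<^sub>v v)"
    and iM: "is_inv n (A * P * A\<^sup>T + W) Mi" and x: "x \<in> carrier_vec n" and y: "y \<in> carrier_vec n"
  shows "x \<bullet> (Mi *\<^sub>v x) \<le> (x + A *\<^sub>v y) \<bullet> (Wi *\<^sub>v (x + A *\<^sub>v y)) + y \<bullet> (Q *\<^sub>v y)"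
proof -
  have c: "W \<in> carrier_mat n n" "Wi \<in> carrier_mat n n" "Q \<in> carrier_mat n n" "P \<in> carrier_mat n n" "Mi \<in> carrier_mat n n"
    and e: "W * Wi = 1\<^sub>m n" "Wi * W = 1\<^sub>m n" "Q * P = 1\<^sub>m n" "(A * P * A\<^sup>T + W) * Mi = 1\<^sub>m n"
    using iW iQ iM unfolding is_inv_def by auto
  have sWi: "Wi\<^sup>T = Wi" using is_inv_sym[OF iW sW] .
  define l where "l = Mi *\<^sub>v x"
  define w where "w = x + A *\<^sub>v y"
  define u where "u = A\<^sup>T *\<^sub>v l"
  have l: "l \<in> carrier_vec n" using l_def c x by simp
  have w: "w \<in> carrier_vec n" using w_def A x y by simp
  have u: "u \<in> carrier_vec n" using u_def A l by simp
  have Wl: "W *\<^sub>v l \<in> carrier_vec n" "P *\<^sub>v u \<in> carrier_vec n" "A *\<^sub>v y \<in> carrier_vec n" using c l u A y by auto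
  have WiW: "Wi *\<^sub>v (W *\<^sub>v l) = l" using c e l by (metis assoc_mult_mat_vec one_mult_mat_vec)
  have QP: "Q *\<^sub>v (P *\<^sub>v u) = u" using c e u by (metis assoc_mult_mat_vec one_mult_mat_vec)
  have Ml: "(A * P * A\<^sup>T + W) *\<^sub>v l = x"
  proof -
    have Mc: "A * P * A\<^sup>T + W \<in> carrier_mat n n" using A c by simp
    have "(A * P * A\<^sup>T + W) *\<^sub>v l = ((A * P * A\<^sup>T + W) * Mi) *\<^sub>v x"
      unfolding l_def by (rule assoc_mult_mat_vec[symmetric, of _ n n]) (use Mc c x in auto)
    then show ?thesis using e x by simp
  qed
  have Ml2: "(A * P * A\<^sup>T + W) *\<^sub>v l = (A * P * A\<^sup>T) *\<^sub>v l + W *\<^sub>v l" using c A l by (simp add: add_mult_distrib_mat_vec[of _ n n])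
  have lM: "l \<bullet> ((A * P * A\<^sup>T + W) *\<^sub>v l) = u \<bullet> (P *\<^sub>v u) + l \<bullet> (W *\<^sub>v l)"
  proof -
    have k: "(A * P * A\<^sup>T) *\<^sub>v l \<in> carrier_vec n" "W *\<^sub>v l \<in> carrier_vec n"
      using c l A assoc3[of A n P "A\<^sup>T" l] by auto
    show ?thesis by (simp only: Ml2 scalar_prod_add_distrib[OF l k] quad_APA[OF A c(4) l] u_def)
  qed
  have lx: "l \<bullet> x = x \<bullet> (Mi *\<^sub>v x)" using l x l_def by (simp add: comm_scalar_prod[of _ n])
  have "0 \<le> (w - W *\<^sub>v l) \<bullet> (Wi *\<^sub>v (w - W *\<^sub>v l))"
    using inv_psd[OF iW sW pW] w Wl by simp
  also have "\<dots> = w \<bullet> (Wi *\<^sub>v w) - 2 * (w \<bullet> l) + l \<bullet> (W *\<^sub>v l)"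
    using quad_sub[OF c(2) sWi w Wl(1)] WiW l Wl by (simp add: comm_scalar_prod[of _ n])
  finally have i1: "0 \<le> w \<bullet> (Wi *\<^sub>v w) - 2 * (w \<bullet> l) + l \<bullet> (W *\<^sub>v l)" .
  have "0 \<le> (y + P *\<^sub>v u) \<bullet> (Q *\<^sub>v (y + P *\<^sub>v u))"
    using pQ y Wl by simp
  also have "\<dots> = y \<bullet> (Q *\<^sub>v y) + 2 * (y \<bullet> u) + u \<bullet> (P *\<^sub>v u)"
    using quad_add[OF c(3) sQ y Wl(2)] QP quad_inv[OF iQ sQ u] by simp
  finally have i2: "0 \<le> y \<bullet> (Q *\<^sub>v y) + 2 * (y \<bullet> u) + u \<bullet> (P *\<^sub>v u)" .
  have yu: "y \<bullet> u = (A *\<^sub>v y) \<bullet> l" using transp_dot[OF A l y] u_def by simp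
  have wl: "w \<bullet> l = x \<bullet> l + (A *\<^sub>v y) \<bullet> l" using w_def x Wl l by (simp add: add_scalar_prod_distrib[of _ n])
  have xl: "x \<bullet> l = l \<bullet> x" using x l by (simp add: comm_scalar_prod[of _ n])
  have lx2: "l \<bullet> x = u \<bullet> (P *\<^sub>v u) + l \<bullet> (W *\<^sub>v l)" using lM Ml by simp
  show ?thesis using i1 i2 yu wl xl lx2 lx unfolding w_def[symmetric] by linarith
qed

lemma ach2: fixes A :: "real mat"
  assumes A: "A \<in> carrier_mat n n" and iW: "is_inv n W Wi" and sW: "W\<^sup>T = W"
    and iQ: "is_inv n Q P" and sQ: "Q\<^sup>T = Q"
    and iM: "is_inv n (A * P * A\<^sup>T + W) Mi" and x: "x \<in> carrier_vec n"
  shows "\<exists>y \<in> carrier_vec n. (x + A *\<^sub>v y) \<bullet> (Wi *\<^sub>v (x + A *\<^sub>v y)) + y \<bullet> (Q *\<^sub>v y) = x \<bullet> (Mi *\<^sub>v x)"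
proof -
  have c: "W \<in> carrier_mat n n" "Wi \<in> carrier_mat n n" "Q \<in> carrier_mat n n" "P \<in> carrier_mat n n" "Mi \<in> carrier_mat n n"
    and e: "W * Wi = 1\<^sub>m n" "Wi * W = 1\<^sub>m n" "Q * P = 1\<^sub>m n" "(A * P * A\<^sup>T + W) * Mi = 1\<^sub>m n"
    using iW iQ iM unfolding is_inv_def by auto
  have sWi: "Wi\<^sup>T = Wi" using is_inv_sym[OF iW sW] .
  define l where "l = Mi *\<^sub>v x"
  define u where "u = A\<^sup>T *\<^sub>v l"
  define v where "v = P *\<^sub>v u"
  have l: "l \<in> carrier_vec n" using l_def c x by simp
  have u: "u \<in> carrier_vec n" using u_def A l by simp
  have v: "v \<in> carrier_vec n" using v_def c u by simp
  have Wl: "W *\<^sub>v l \<in> carrier_vec n" "(A * P * A\<^sup>T) *\<^sub>v l \<in> carrier_vec n" using c l A assoc3[of A n P "A\<^sup>T" l] by auto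
  have Ml: "(A * P * A\<^sup>T + W) *\<^sub>v l = x"
  proof -
    have Mc: "A * P * A\<^sup>T + W \<in> carrier_mat n n" using A c by simp
    have "(A * P * A\<^sup>T + W) *\<^sub>v l = ((A * P * A\<^sup>T + W) * Mi) *\<^sub>v x"
      unfolding l_def by (rule assoc_mult_mat_vec[symmetric, of _ n n]) (use Mc c x in auto)
    then show ?thesis using e x by simp
  qed
  have Ml2: "(A * P * A\<^sup>T + W) *\<^sub>v l = (A * P * A\<^sup>T) *\<^sub>v l + W *\<^sub>v l" using c A l by (simp add: add_mult_distrib_mat_vec[of _ n n])
  have Av: "A *\<^sub>v v = (A * P * A\<^sup>T) *\<^sub>v l" using A c l u_def v_def assoc3[of A n P "A\<^sup>T" l] by simp
  have lM: "l \<bullet> ((A * P * A\<^sup>T + W) *\<^sub>v l) = u \<bullet> (P *\<^sub>v u) + l \<bullet> (W *\<^sub>v l)"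
  proof -
    have k: "(A * P * A\<^sup>T) *\<^sub>v l \<in> carrier_vec n" "W *\<^sub>v l \<in> carrier_vec n"
      using c l A assoc3[of A n P "A\<^sup>T" l] by auto
    show ?thesis by (simp only: Ml2 scalar_prod_add_distrib[OF l k] quad_APA[OF A c(4) l] u_def)
  qed
  have lx: "l \<bullet> x = x \<bullet> (Mi *\<^sub>v x)" using l x l_def by (simp add: comm_scalar_prod[of _ n])
  have xAv: "x + A *\<^sub>v (- v) = W *\<^sub>v l"
  proof -
    have "x + A *\<^sub>v (- v) = x - A *\<^sub>v v" using mult_uminus_vec[OF A v] x A v by (auto intro!: eq_vecI)
    also have "\<dots> = W *\<^sub>v l" unfolding Av Ml[symmetric] Ml2 by (rule add_sub_cancel_vec[OF Wl(2) Wl(1)])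
    finally show ?thesis .
  qed
  have t1: "(W *\<^sub>v l) \<bullet> (Wi *\<^sub>v (W *\<^sub>v l)) = l \<bullet> (W *\<^sub>v l)"
    using quad_inv[OF is_inv_swap[OF iW] sWi l] by simp
  have t2: "(- v) \<bullet> (Q *\<^sub>v (- v)) = u \<bullet> (P *\<^sub>v u)"
    using quad_inv[OF iQ sQ u] v_def mult_uminus_vec[OF c(3) v] v c by simp
  show ?thesis
    by (rule bexI[of _ "- v"]) (use xAv t1 t2 lM Ml lx v in auto)
qed

lemma sym_add: fixes X :: "real mat" assumes "X \<in> carrier_mat n n" "Y \<in> carrier_mat n n" "X\<^sup>T = X" "Y\<^sup>T = Y"
  shows "(X + Y)\<^sup>T = X + Y"
  using transpose_add[OF assms(1,2)] assms(3,4) by simp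

lemma form_add: fixes X :: "real mat" assumes "X \<in> carrier_mat n n" "Y \<in> carrier_mat n n" "x \<in> carrier_vec n"
  shows "x \<bullet> ((X + Y) *\<^sub>v x) = x \<bullet> (X *\<^sub>v x) + x \<bullet> (Y *\<^sub>v x)"
  using assms by (simp add: add_mult_distrib_mat_vec[of _ n n] scalar_prod_add_distrib[of _ n])

lemma sym_APA: fixes A :: "real mat" assumes A: "A \<in> carrier_mat n n" and P: "P \<in> carrier_mat n n" and s: "P\<^sup>T = P"
  shows "(A * P * A\<^sup>T)\<^sup>T = A * P * A\<^sup>T"
proof -
  have e1: "(A * P * A\<^sup>T)\<^sup>T = (A\<^sup>T)\<^sup>T * (A * P)\<^sup>T" by (rule transpose_mult[of _ n n _ n]) (use A P in auto)
  have e2: "(A * P)\<^sup>T = P\<^sup>T * A\<^sup>T" by (rule transpose_mult[of _ n n _ n]) (use A P in auto)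
  have e3: "A * (P * A\<^sup>T) = A * P * A\<^sup>T" by (rule assoc_mult_mat[symmetric, of _ n n _ n _ n]) (use A P in auto)
  show ?thesis unfolding e1 e2 s transpose_transpose e3 ..
qed

lemma pd_pos: fixes W :: "real mat" assumes p: "pd W" and x: "x \<in> carrier_vec (dim_row W)" "x \<noteq> 0\<^sub>v (dim_row W)" shows "0 < x \<bullet> (W *\<^sub>v x)"
proof -
  have "\<forall>x \<in> carrier_vec (dim_row W). x \<noteq> 0\<^sub>v (dim_row W) \<longrightarrow> 0 < x \<bullet> (W *\<^sub>v x)"
    using p unfolding pd_def by (rule conjunct2[OF conjunct2])
  then have "x \<noteq> 0\<^sub>v (dim_row W) \<longrightarrow> 0 < x \<bullet> (W *\<^sub>v x)" using x(1) by (rule bspec)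
  then show ?thesis using x(2) by (rule mp)
qed

lemma pd_psd_form: fixes W :: "real mat" assumes p: "pd W" and x: "x \<in> carrier_vec (dim_row W)" shows "0 \<le> x \<bullet> (W *\<^sub>v x)"
proof (cases "x = 0\<^sub>v (dim_row W)")
  case True
  have c: "W *\<^sub>v 0\<^sub>v (dim_row W) \<in> carrier_vec (dim_row W)" by (rule carrier_vecI) (rule dim_mult_mat_vec)
  show ?thesis unfolding True scalar_prod_left_zero[OF c] by (rule order_refl)
next
  case False
  show ?thesis using pd_pos[OF p x False] by (rule less_imp_le)
qed

lemma h_props: fixes A :: "real mat" assumes A: "A \<in> carrier_mat n n" and P: "P \<in> carrier_mat n n" and s: "P\<^sup>T = P"
  and pP: "\<And>x. x \<in> carrier_vec n \<Longrightarrow> 0 \<le> x \<bullet> (P *\<^sub>v x)" and W: "W \<in> carrier_mat n n" and pW: "pd W"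
  shows "A * P * A\<^sup>T + W \<in> carrier_mat n n" "(A * P * A\<^sup>T + W)\<^sup>T = A * P * A\<^sup>T + W" "pd (A * P * A\<^sup>T + W)"
    "\<And>x. x \<in> carrier_vec n \<Longrightarrow> 0 \<le> x \<bullet> ((A * P * A\<^sup>T + W) *\<^sub>v x)"
proof -
  have sW: "W\<^sup>T = W" using pW unfolding pd_def by (rule conjunct1[OF conjunct2])
  have c: "A * P * A\<^sup>T \<in> carrier_mat n n" using A P by simp
  show c2: "A * P * A\<^sup>T + W \<in> carrier_mat n n" using c W by simp
  show s2: "(A * P * A\<^sup>T + W)\<^sup>T = A * P * A\<^sup>T + W" using sym_add[OF c W sym_APA[OF A P s] sW] .
  have q1: "0 \<le> x \<bullet> ((A * P * A\<^sup>T) *\<^sub>v x)" if x: "x \<in> carrier_vec n" for x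
    using quad_APA[OF A P x] pP[of "A\<^sup>T *\<^sub>v x"] A x by simp
  have dW: "dim_row W = n" using W by simp
  have q2: "0 \<le> x \<bullet> (W *\<^sub>v x)" if x: "x \<in> carrier_vec n" for x
    using pd_psd_form[OF pW, unfolded dW, OF x] .
  have q3: "0 < x \<bullet> (W *\<^sub>v x)" if x: "x \<in> carrier_vec n" "x \<noteq> 0\<^sub>v n" for x
    using pd_pos[OF pW, unfolded dW, OF x] .
  show "0 \<le> x \<bullet> ((A * P * A\<^sup>T + W) *\<^sub>v x)" if x: "x \<in> carrier_vec n" for x
    using form_add[OF c W x] q1[OF x] q2[OF x] by linarith
  have d: "dim_row (A * P * A\<^sup>T + W) = n" using W by simp
  have pos: "\<forall>x\<in>carrier_vec n. x \<noteq> 0\<^sub>v n \<longrightarrow> 0 < x \<bullet> ((A * P * A\<^sup>T + W) *\<^sub>v x)"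
  proof (intro ballI impI)
    fix x :: "real vec" assume x: "x \<in> carrier_vec n" "x \<noteq> 0\<^sub>v n"
    show "0 < x \<bullet> ((A * P * A\<^sup>T + W) *\<^sub>v x)" using form_add[OF c W x(1)] q1[OF x(1)] q3[OF x] by linarith
  qed
  show "pd (A * P * A\<^sup>T + W)" unfolding pd_def d using c2 s2 pos by (intro conjI)
qed

lemma lmi1_form: fixes P :: "real mat" assumes P: "P \<in> carrier_mat n n" and Q: "Q \<in> carrier_mat n n"
  and x: "x \<in> carrier_vec n" and y: "y \<in> carrier_vec n"
  shows "x \<bullet> (P *\<^sub>v x + 1\<^sub>m n *\<^sub>v y) + y \<bullet> (1\<^sub>m n *\<^sub>v x + Q *\<^sub>v y) = x \<bullet> (P *\<^sub>v x) + 2 * (x \<bullet> y) + y \<bullet> (Q *\<^sub>v y)"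
proof -
  have "1\<^sub>m n *\<^sub>v y = y" "1\<^sub>m n *\<^sub>v x = x" using x y by auto
  moreover have "x \<bullet> (P *\<^sub>v x + y) = x \<bullet> (P *\<^sub>v x) + x \<bullet> y" using scalar_prod_add_distrib[of x n "P *\<^sub>v x" y] P x y by simp
  moreover have "y \<bullet> (x + Q *\<^sub>v y) = y \<bullet> x + y \<bullet> (Q *\<^sub>v y)" using scalar_prod_add_distrib[of y n x "Q *\<^sub>v y"] Q x y by simp
  moreover have "y \<bullet> x = x \<bullet> y" using comm_scalar_prod[OF y x] .
  ultimately show ?thesis by simp
qed

lemma D_to_R:
  fixes n T :: nat and A :: "nat \<Rightarrow> real mat" and W \<Sigma>0 :: "real mat"
    and Cs Vs :: "nat \<Rightarrow> real mat set" and m :: "nat \<Rightarrow> nat"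
  assumes A_dim: "\<forall>t\<le>T. A t \<in> carrier_mat n n"
    and W_dim: "W \<in> carrier_mat n n" and W_pd: "pd W"
    and S_dim: "\<Sigma>0 \<in> carrier_mat n n" and S_pd: "pd \<Sigma>0"
    and C_dim: "\<forall>t\<le>T. Cs t \<subseteq> carrier_mat (m t) n"
    and V_dim: "\<forall>t\<le>T. Vs t \<subseteq> carrier_mat (m t) (m t)"
    and V_pd: "\<forall>t\<le>T. \<forall>V\<in>Vs t. pd V"
    and fD: "feasD n T A W \<Sigma>0 Cs Vs P Q Qp R C V"
  shows "feasR n T A W \<Sigma>0 Cs Vs P Q Qp R"
proof -
  have fd: "\<forall>t\<le>T. P t \<in> carrier_mat n n \<and> Q t \<in> carrier_mat n n \<and> Qp t \<in> carrier_mat n n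
         \<and> R t \<in> carrier_mat n n
         \<and> is_inv n (P t) (Q t)
         \<and> Q t = Qp t + R t
         \<and> (1 \<le> t \<longrightarrow> is_inv n (Qp t) (hmap A W t (P (t - 1))))
         \<and> R t = (C t)\<^sup>T * minv (V t) * C t
         \<and> C t \<in> Cs t \<and> V t \<in> Vs t" using fD unfolding feasD_def by (rule conjunct1)
  have q0: "is_inv n (Qp 0) \<Sigma>0" using fD unfolding feasD_def by (rule conjunct2)
  obtain Wi where iW: "is_inv n W Wi" using pd_is_inv[OF W_dim W_pd] by blast
  have mW: "minv W = Wi" by (rule minv_eq[OF iW])
  have Wi: "Wi \<in> carrier_mat n n" using iW unfolding is_inv_def by blast
  have sW: "W\<^sup>T = W" using W_pd unfolding pd_def by (rule conjunct1[OF conjunct2])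
  have sWi: "Wi\<^sup>T = Wi" by (rule is_inv_sym[OF iW sW])
  have dW: "dim_row W = n" using W_dim by simp
  have pW: "\<And>x. x \<in> carrier_vec n \<Longrightarrow> 0 \<le> x \<bullet> (W *\<^sub>v x)" using pd_psd_form[OF W_pd, unfolded dW] .
  have sS: "\<Sigma>0\<^sup>T = \<Sigma>0" using S_pd unfolding pd_def by (rule conjunct1[OF conjunct2])
  have dS: "dim_row \<Sigma>0 = n" using S_dim by simp
  have pS: "\<And>x. x \<in> carrier_vec n \<Longrightarrow> 0 \<le> x \<bullet> (\<Sigma>0 *\<^sub>v x)" using pd_psd_form[OF S_pd, unfolded dS] .
  define good where "good t \<longleftrightarrow> (Qp t)\<^sup>T = Qp t \<and> (\<forall>x\<in>carrier_vec n. 0 \<le> x \<bullet> (Qp t *\<^sub>v x)) \<and>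
     (Q t)\<^sup>T = Q t \<and> (\<forall>x\<in>carrier_vec n. 0 \<le> x \<bullet> (Q t *\<^sub>v x)) \<and>
     (P t)\<^sup>T = P t \<and> (\<forall>x\<in>carrier_vec n. 0 \<le> x \<bullet> (P t *\<^sub>v x))" for t
  have step: "good t" if t: "t \<le> T" and s1: "(Qp t)\<^sup>T = Qp t" and p1: "\<And>x. x \<in> carrier_vec n \<Longrightarrow> 0 \<le> x \<bullet> (Qp t *\<^sub>v x)" for t
  proof -
    have ft: "P t \<in> carrier_mat n n" "Q t \<in> carrier_mat n n" "Qp t \<in> carrier_mat n n" "R t \<in> carrier_mat n n"
      "is_inv n (P t) (Q t)" "Q t = Qp t + R t" "R t = (C t)\<^sup>T * minv (V t) * C t" "C t \<in> Cs t" "V t \<in> Vs t"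
      using fd t by auto
    have Cc: "C t \<in> carrier_mat (m t) n" using C_dim t ft(8) by blast
    have Vc: "V t \<in> carrier_mat (m t) (m t)" using V_dim t ft(9) by blast
    have Vp: "pd (V t)" using V_pd t ft(9) by blast
    note Rp = R_props[OF Cc Vc Vp, folded ft(7)]
    have sQ: "(Q t)\<^sup>T = Q t" unfolding ft(6) by (rule sym_add[OF ft(3,4) s1 Rp(2)])
    have pQ: "0 \<le> x \<bullet> (Q t *\<^sub>v x)" if x: "x \<in> carrier_vec n" for x
      unfolding ft(6) form_add[OF ft(3,4) x] using p1[OF x] Rp(3)[OF x] by linarith
    have iQ: "is_inv n (Q t) (P t)" by (rule is_inv_swap[OF ft(5)])
    have sP: "(P t)\<^sup>T = P t" by (rule is_inv_sym[OF iQ sQ])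
    have pP: "0 \<le> x \<bullet> (P t *\<^sub>v x)" if x: "x \<in> carrier_vec n" for x
      by (rule inv_psd[OF iQ sQ pQ x])
    show ?thesis unfolding good_def using s1 p1 sQ pQ sP pP by blast
  qed
  have props: "t \<le> T \<longrightarrow> good t" for t
  proof (induction t)
    case 0
    have iS: "is_inv n \<Sigma>0 (Qp 0)" by (rule is_inv_swap[OF q0])
    show ?case using step[of 0] is_inv_sym[OF iS sS] inv_psd[OF iS sS pS] by blast
  next
    case (Suc k)
    show ?case
    proof
      assume k: "Suc k \<le> T"
      then have gk: "good k" using Suc.IH by simp
      have Pk: "P k \<in> carrier_mat n n" using fd k by auto
      have Ak: "A k \<in> carrier_mat n n" using A_dim k by auto
      have sP: "(P k)\<^sup>T = P k" and pP: "\<And>x. x \<in> carrier_vec n \<Longrightarrow> 0 \<le> x \<bullet> (P k *\<^sub>v x)"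
        using gk unfolding good_def by blast+
      note hp = h_props[OF Ak Pk sP pP W_dim W_pd]
      have "is_inv n (Qp (Suc k)) (hmap A W (Suc k) (P k))" using fd k by auto
      then have ih: "is_inv n (A k * P k * (A k)\<^sup>T + W) (Qp (Suc k))" unfolding hmap_def by (simp add: is_inv_swap)
      show "good (Suc k)" using step[OF k is_inv_sym[OF ih hp(2)] inv_psd[OF ih hp(2) hp(4)]] .
    qed
  qed
  show ?thesis unfolding feasR_def
  proof (intro conjI allI impI)
    show "is_inv n (Qp 0) \<Sigma>0" by (rule q0)
    fix t assume t: "t \<le> T"
    have ft: "P t \<in> carrier_mat n n" "Q t \<in> carrier_mat n n" "Qp t \<in> carrier_mat n n" "R t \<in> carrier_mat n n"
      "is_inv n (P t) (Q t)" "Q t = Qp t + R t" "R t = (C t)\<^sup>T * minv (V t) * C t" "C t \<in> Cs t" "V t \<in> Vs t"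
      using fd t by auto
    have gt: "good t" using props t by blast
    have sQ: "(Q t)\<^sup>T = Q t" and sP: "(P t)\<^sup>T = P t" and sQp: "(Qp t)\<^sup>T = Qp t" using gt unfolding good_def by blast+
    have pQ: "\<And>x. x \<in> carrier_vec n \<Longrightarrow> 0 \<le> x \<bullet> (Q t *\<^sub>v x)" using gt unfolding good_def by blast
    have iQ: "is_inv n (Q t) (P t)" by (rule is_inv_swap[OF ft(5)])
    show "P t \<in> carrier_mat n n" "Q t \<in> carrier_mat n n" "Qp t \<in> carrier_mat n n" "R t \<in> carrier_mat n n"
      "Q t = Qp t + R t" using ft by auto
    show "R t \<in> Rset Cs Vs t" unfolding Rset_def using ft(7-9) by blast
    show "psd (four_block_mat (P t) (1\<^sub>m n) (1\<^sub>m n) (Q t))"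
    proof (rule psd_block_intro[OF ft(1) one_carrier_mat one_carrier_mat ft(2) sP sQ transpose_one])
      fix x y :: "real vec" assume x: "x \<in> carrier_vec n" and y: "y \<in> carrier_vec n"
      define u where "u = P t *\<^sub>v x"
      have u: "u \<in> carrier_vec n" using u_def ft(1) x by simp
      have Qu: "Q t *\<^sub>v u = x" using iQ x unfolding u_def is_inv_def by (metis assoc_mult_mat_vec one_mult_mat_vec)
      have "0 \<le> (u + y) \<bullet> (Q t *\<^sub>v (u + y))" using pQ u y by simp
      also have "\<dots> = u \<bullet> (Q t *\<^sub>v u) + 2 * (u \<bullet> (Q t *\<^sub>v y)) + y \<bullet> (Q t *\<^sub>v y)" by (rule quad_add[OF ft(2) sQ u y])
      also have "u \<bullet> (Q t *\<^sub>v u) = x \<bullet> (P t *\<^sub>v x)" using quad_inv[OF iQ sQ x] u_def by simp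
      also have "u \<bullet> (Q t *\<^sub>v y) = x \<bullet> y" using sym_bil[OF ft(2) sQ u y] Qu comm_scalar_prod[OF y x] by simp
      finally show "0 \<le> x \<bullet> (P t *\<^sub>v x + 1\<^sub>m n *\<^sub>v y) + y \<bullet> (1\<^sub>m n *\<^sub>v x + Q t *\<^sub>v y)"
        unfolding lmi1_form[OF ft(1,2) x y] .
    qed
    assume t1: "1 \<le> t"
    then obtain k where tk: "t = Suc k" by (cases t) auto
    have kT: "k \<le> T" using t tk by simp
    have tk1: "t - 1 = k" using tk by simp
    have Pk: "P k \<in> carrier_mat n n" "Q k \<in> carrier_mat n n" "is_inv n (P k) (Q k)" using fd kT by auto
    have Ak: "A k \<in> carrier_mat n n" using A_dim kT by auto
    have gk: "good k" using props kT by blast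
    have sQk: "(Q k)\<^sup>T = Q k" and pQk: "\<And>x. x \<in> carrier_vec n \<Longrightarrow> 0 \<le> x \<bullet> (Q k *\<^sub>v x)" using gk unfolding good_def by blast+
    have "is_inv n (Qp t) (hmap A W t (P (t - 1)))" using fd t t1 by auto
    then have ih: "is_inv n (A k * P k * (A k)\<^sup>T + W) (Qp t)" unfolding hmap_def tk by (simp add: is_inv_swap)
    have c1: "Wi - Qp t \<in> carrier_mat n n" "Wi * A k \<in> carrier_mat n n" "(A k)\<^sup>T * Wi \<in> carrier_mat n n"
      "Q k + (A k)\<^sup>T * Wi * A k \<in> carrier_mat n n" using Wi ft Ak Pk by auto
    have s1: "(Wi - Qp t)\<^sup>T = Wi - Qp t" using transpose_minus[OF Wi ft(3)] sWi sQp by simp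
    have s2: "((A k)\<^sup>T * Wi * A k)\<^sup>T = (A k)\<^sup>T * Wi * A k"
      using sym_APA[of "(A k)\<^sup>T" n Wi] Ak Wi sWi by simp
    have s3: "(Q k + (A k)\<^sup>T * Wi * A k)\<^sup>T = Q k + (A k)\<^sup>T * Wi * A k"
      by (rule sym_add[OF Pk(2) _ sQk s2]) (use Ak Wi in simp)
    have s4: "(Wi * A k)\<^sup>T = (A k)\<^sup>T * Wi" using transpose_mult[OF Wi Ak] sWi by simp
    show "psd (four_block_mat (minv W - Qp t) (minv W * A (t - 1)) ((A (t - 1))\<^sup>T * minv W)
             (Q (t - 1) + (A (t - 1))\<^sup>T * minv W * A (t - 1)))"
      unfolding mW tk1
    proof (rule psd_block_intro[OF c1 s1 s3 s4])
      fix x y :: "real vec" assume x: "x \<in> carrier_vec n" and y: "y \<in> carrier_vec n"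
      have "x \<bullet> (Qp t *\<^sub>v x) \<le> (x + A k *\<^sub>v y) \<bullet> (Wi *\<^sub>v (x + A k *\<^sub>v y)) + y \<bullet> (Q k *\<^sub>v y)"
        by (rule lb2[OF Ak iW sW pW is_inv_swap[OF Pk(3)] sQk pQk ih x y])
      then show "0 \<le> x \<bullet> ((Wi - Qp t) *\<^sub>v x + (Wi * A k) *\<^sub>v y) +
             y \<bullet> (((A k)\<^sup>T * Wi) *\<^sub>v x + (Q k + (A k)\<^sup>T * Wi * A k) *\<^sub>v y)"
        unfolding lmi2_form[OF Wi ft(3) Pk(2) Ak sWi x y] by linarith
    qed
  qed
qed

fun qpc :: "(nat \<Rightarrow> real mat) \<Rightarrow> real mat \<Rightarrow> (nat \<Rightarrow> real mat) \<Rightarrow> real mat \<Rightarrow> nat \<Rightarrow> real mat" where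
  "qpc A W R q0 0 = q0"
| "qpc A W R q0 (Suc t) = minv (A t * minv (qpc A W R q0 t + R t) * (A t)\<^sup>T + W)"

lemma inv_pd_full: fixes M :: "real mat" assumes i: "is_inv n M N" and p: "pd M" shows "pd N"
proof -
  have c: "M \<in> carrier_mat n n" "N \<in> carrier_mat n n" using i unfolding is_inv_def by blast+
  have dM: "dim_row M = n" "dim_row N = n" using c by auto
  have s: "M\<^sup>T = M" using p unfolding pd_def by (rule conjunct1[OF conjunct2])
  have pos: "\<forall>x\<in>carrier_vec n. x \<noteq> 0\<^sub>v n \<longrightarrow> 0 < x \<bullet> (N *\<^sub>v x)"
  proof (intro ballI impI)
    fix x :: "real vec" assume x: "x \<in> carrier_vec n" "x \<noteq> 0\<^sub>v n"
    show "0 < x \<bullet> (N *\<^sub>v x)" by (rule inv_pd[OF i s pd_pos[OF p, unfolded dM] x])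
  qed
  show ?thesis unfolding pd_def dM using c(2) is_inv_sym[OF i s] pos by (intro conjI)
qed

lemma pd_add: fixes X :: "real mat" assumes X: "X \<in> carrier_mat n n" "pd X" and Y: "Y \<in> carrier_mat n n" "Y\<^sup>T = Y"
  and pY: "\<And>x. x \<in> carrier_vec n \<Longrightarrow> 0 \<le> x \<bullet> (Y *\<^sub>v x)"
  shows "pd (X + Y)"
proof -
  have dX: "dim_row X = n" "dim_row (X + Y) = n" using X Y by auto
  have s: "X\<^sup>T = X" using X(2) unfolding pd_def by (rule conjunct1[OF conjunct2])
  have pos: "\<forall>x\<in>carrier_vec n. x \<noteq> 0\<^sub>v n \<longrightarrow> 0 < x \<bullet> ((X + Y) *\<^sub>v x)"
  proof (intro ballI impI)
    fix x :: "real vec" assume x: "x \<in> carrier_vec n" "x \<noteq> 0\<^sub>v n"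
    show "0 < x \<bullet> ((X + Y) *\<^sub>v x)" using form_add[OF X(1) Y(1) x(1)] pd_pos[OF X(2), unfolded dX, OF x] pY[OF x(1)] by linarith
  qed
  have c: "X + Y \<in> carrier_mat n n" using X Y by simp
  show ?thesis unfolding pd_def dX using c sym_add[OF X(1) Y(1) s Y(2)] pos by (intro conjI)
qed

lemma R_to_D:
  fixes n T :: nat and A :: "nat \<Rightarrow> real mat" and W \<Sigma>0 :: "real mat"
    and Cs Vs :: "nat \<Rightarrow> real mat set" and m :: "nat \<Rightarrow> nat"
  assumes A_dim: "\<forall>t\<le>T. A t \<in> carrier_mat n n"
    and W_dim: "W \<in> carrier_mat n n" and W_pd: "pd W"
    and S_dim: "\<Sigma>0 \<in> carrier_mat n n" and S_pd: "pd \<Sigma>0"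
    and C_dim: "\<forall>t\<le>T. Cs t \<subseteq> carrier_mat (m t) n"
    and V_dim: "\<forall>t\<le>T. Vs t \<subseteq> carrier_mat (m t) (m t)"
    and V_pd: "\<forall>t\<le>T. \<forall>V\<in>Vs t. pd V"
    and fR: "feasR n T A W \<Sigma>0 Cs Vs P Q Qp R"
  shows "\<exists>P' Q' Qp' C V. feasD n T A W \<Sigma>0 Cs Vs P' Q' Qp' R C V \<and>
     (\<forall>t\<le>T. (\<forall>x\<in>carrier_vec n. x \<bullet> (Q t *\<^sub>v x) \<le> x \<bullet> (Q' t *\<^sub>v x)) \<and>
              (\<forall>x\<in>carrier_vec n. x \<bullet> (P' t *\<^sub>v x) \<le> x \<bullet> (P t *\<^sub>v x)))"
proof -
  have fr: "\<forall>t\<le>T. P t \<in> carrier_mat n n \<and> Q t \<in> carrier_mat n n \<and> Qp t \<in> carrier_mat n n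
         \<and> R t \<in> carrier_mat n n
         \<and> Q t = Qp t + R t
         \<and> psd (four_block_mat (P t) (1\<^sub>m n) (1\<^sub>m n) (Q t))
         \<and> (1 \<le> t \<longrightarrow>
              psd (four_block_mat (minv W - Qp t) (minv W * A (t - 1))
                     ((A (t - 1))\<^sup>T * minv W) (Q (t - 1) + (A (t - 1))\<^sup>T * minv W * A (t - 1))))
         \<and> R t \<in> Rset Cs Vs t" using fR unfolding feasR_def by (rule conjunct1)
  have q0: "is_inv n (Qp 0) \<Sigma>0" using fR unfolding feasR_def by (rule conjunct2)
  have "\<forall>t. \<exists>c v. t \<le> T \<longrightarrow> R t = c\<^sup>T * minv v * c \<and> c \<in> Cs t \<and> v \<in> Vs t"
    using fr unfolding Rset_def by blast
  then obtain C V where CV: "\<And>t. t \<le> T \<Longrightarrow> R t = (C t)\<^sup>T * minv (V t) * C t \<and> C t \<in> Cs t \<and> V t \<in> Vs t"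
    by metis
  obtain Wi where iW: "is_inv n W Wi" using pd_is_inv[OF W_dim W_pd] by blast
  have mW: "minv W = Wi" by (rule minv_eq[OF iW])
  have Wi: "Wi \<in> carrier_mat n n" using iW unfolding is_inv_def by blast
  have sW: "W\<^sup>T = W" using W_pd unfolding pd_def by (rule conjunct1[OF conjunct2])
  have sWi: "Wi\<^sup>T = Wi" by (rule is_inv_sym[OF iW sW])
  have Rp: "R t \<in> carrier_mat n n \<and> (R t)\<^sup>T = R t \<and> (\<forall>x\<in>carrier_vec n. 0 \<le> x \<bullet> (R t *\<^sub>v x))" if t: "t \<le> T" for t
  proof -
    have Cc: "C t \<in> carrier_mat (m t) n" using C_dim t CV[OF t] by blast
    have Vc: "V t \<in> carrier_mat (m t) (m t)" using V_dim t CV[OF t] by blast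
    have Vp: "pd (V t)" using V_pd t CV[OF t] by blast
    have e: "R t = (C t)\<^sup>T * minv (V t) * C t" using CV[OF t] by blast
    show ?thesis unfolding e using R_props[OF Cc Vc Vp] by blast
  qed
  define Qp' where "Qp' = qpc A W R (Qp 0)"
  define Q' where "Q' t = Qp' t + R t" for t
  define P' where "P' t = minv (Q' t)" for t
  define I where "I t \<longleftrightarrow> Qp' t \<in> carrier_mat n n \<and> pd (Qp' t) \<and> (\<forall>x\<in>carrier_vec n. x \<bullet> (Q t *\<^sub>v x) \<le> x \<bullet> (Q' t *\<^sub>v x))" for t
  have derived: "Q' t \<in> carrier_mat n n \<and> pd (Q' t) \<and> is_inv n (Q' t) (P' t) \<and> (Q' t)\<^sup>T = Q' t \<and>
      P' t \<in> carrier_mat n n \<and> (P' t)\<^sup>T = P' t \<and> (\<forall>x\<in>carrier_vec n. 0 \<le> x \<bullet> (P' t *\<^sub>v x))"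
    if t: "t \<le> T" and It: "I t" for t
  proof -
    have c: "Qp' t \<in> carrier_mat n n" and p: "pd (Qp' t)" using It unfolding I_def by blast+
    have R: "R t \<in> carrier_mat n n" "(R t)\<^sup>T = R t" "\<And>x. x \<in> carrier_vec n \<Longrightarrow> 0 \<le> x \<bullet> (R t *\<^sub>v x)"
      using Rp[OF t] by blast+
    have cQ: "Q' t \<in> carrier_mat n n" unfolding Q'_def using c R by simp
    have pQ: "pd (Q' t)" unfolding Q'_def by (rule pd_add[OF c p R])
    obtain N where iN: "is_inv n (Q' t) N" using pd_is_inv[OF cQ pQ] by blast
    have iQ: "is_inv n (Q' t) (P' t)" using iN minv_eq[OF iN] unfolding P'_def by simp
    have sQ: "(Q' t)\<^sup>T = Q' t" using pQ unfolding pd_def by (rule conjunct1[OF conjunct2])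
    have dQ: "dim_row (Q' t) = n" using cQ by simp
    have psdQ: "\<And>x. x \<in> carrier_vec n \<Longrightarrow> 0 \<le> x \<bullet> (Q' t *\<^sub>v x)" using pd_psd_form[OF pQ, unfolded dQ] .
    have cP: "P' t \<in> carrier_mat n n" using iQ unfolding is_inv_def by blast
    have "\<forall>x\<in>carrier_vec n. 0 \<le> x \<bullet> (P' t *\<^sub>v x)" using inv_psd[OF iQ sQ psdQ] by blast
    then show ?thesis using cQ pQ iQ sQ cP is_inv_sym[OF iQ sQ] by blast
  qed
  have inv: "t \<le> T \<longrightarrow> I t" for t
  proof (induction t)
    case 0
    have iS: "is_inv n \<Sigma>0 (Qp 0)" by (rule is_inv_swap[OF q0])
    have e: "Qp' 0 = Qp 0" unfolding Qp'_def by simp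
    have "Q' 0 = Q 0" unfolding Q'_def e using fr by auto
    then show ?case unfolding I_def e using inv_pd_full[OF iS S_pd] iS unfolding is_inv_def by auto
  next
    case (Suc k)
    show ?case
    proof
      assume k: "Suc k \<le> T"
      then have kT: "k \<le> T" by simp
      have Ik: "I k" using Suc.IH kT by simp
      note dk = derived[OF kT Ik]
      have Ak: "A k \<in> carrier_mat n n" using A_dim kT by auto
      have pP: "\<And>x. x \<in> carrier_vec n \<Longrightarrow> 0 \<le> x \<bullet> (P' k *\<^sub>v x)" using dk by blast
      have cP: "P' k \<in> carrier_mat n n" and sP: "(P' k)\<^sup>T = P' k" using dk by blast+
      note hp = h_props[OF Ak cP sP pP W_dim W_pd]
      obtain Mi where iM: "is_inv n (A k * P' k * (A k)\<^sup>T + W) Mi" using pd_is_inv[OF hp(1) hp(3)] by blast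
      have e: "Qp' (Suc k) = Mi" unfolding Qp'_def using minv_eq[OF iM] unfolding P'_def Q'_def Qp'_def by simp
      have cM: "Mi \<in> carrier_mat n n" using iM unfolding is_inv_def by blast
      have pM: "pd Mi" by (rule inv_pd_full[OF iM hp(3)])
      have le: "x \<bullet> (Q (Suc k) *\<^sub>v x) \<le> x \<bullet> (Q' (Suc k) *\<^sub>v x)" if x: "x \<in> carrier_vec n" for x
      proof -
        have frk: "Q (Suc k) = Qp (Suc k) + R (Suc k)" "Qp (Suc k) \<in> carrier_mat n n" "R (Suc k) \<in> carrier_mat n n"
          "Q k \<in> carrier_mat n n"
          using fr k kT by auto
        have "psd (four_block_mat (minv W - Qp (Suc k)) (minv W * A (Suc k - 1))
                     ((A (Suc k - 1))\<^sup>T * minv W) (Q (Suc k - 1) + (A (Suc k - 1))\<^sup>T * minv W * A (Suc k - 1)))"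
          using mp[OF conjunct1[OF conjunct2[OF conjunct2[OF conjunct2[OF conjunct2[OF conjunct2[OF conjunct2[OF fr[rule_format, OF k]]]]]]]]] by simp
        then have frk5: "psd (four_block_mat (Wi - Qp (Suc k)) (Wi * A k) ((A k)\<^sup>T * Wi) (Q k + (A k)\<^sup>T * Wi * A k))"
          unfolding mW diff_Suc_1 .
        obtain y where y: "y \<in> carrier_vec n"
          and ye: "(x + A k *\<^sub>v y) \<bullet> (Wi *\<^sub>v (x + A k *\<^sub>v y)) + y \<bullet> (Q' k *\<^sub>v y) = x \<bullet> (Mi *\<^sub>v x)"
          using ach2[OF Ak iW sW _ _ iM x, of "Q' k"] dk by blast
        have c1: "Wi - Qp (Suc k) \<in> carrier_mat n n" "Wi * A k \<in> carrier_mat n n" "(A k)\<^sup>T * Wi \<in> carrier_mat n n"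
          "Q k + (A k)\<^sup>T * Wi * A k \<in> carrier_mat n n" using Wi frk Ak by auto
        have "0 \<le> x \<bullet> ((Wi - Qp (Suc k)) *\<^sub>v x + (Wi * A k) *\<^sub>v y) + y \<bullet> (((A k)\<^sup>T * Wi) *\<^sub>v x + (Q k + (A k)\<^sup>T * Wi * A k) *\<^sub>v y)"
          by (rule psd_block_use(3)[OF c1 frk5 x y])
        then have l1: "0 \<le> (x + A k *\<^sub>v y) \<bullet> (Wi *\<^sub>v (x + A k *\<^sub>v y)) - x \<bullet> (Qp (Suc k) *\<^sub>v x) + y \<bullet> (Q k *\<^sub>v y)"
          unfolding lmi2_form[OF Wi frk(2) frk(4) Ak sWi x y] .
        have l2: "y \<bullet> (Q k *\<^sub>v y) \<le> y \<bullet> (Q' k *\<^sub>v y)" using Ik y unfolding I_def by blast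
        have l3: "x \<bullet> (Q (Suc k) *\<^sub>v x) = x \<bullet> (Qp (Suc k) *\<^sub>v x) + x \<bullet> (R (Suc k) *\<^sub>v x)"
          unfolding frk(1) by (rule form_add[OF frk(2,3) x])
        have l4: "x \<bullet> (Q' (Suc k) *\<^sub>v x) = x \<bullet> (Mi *\<^sub>v x) + x \<bullet> (R (Suc k) *\<^sub>v x)"
          unfolding Q'_def e by (rule form_add[OF cM frk(3) x])
        show ?thesis using l1 l2 l3 l4 ye by linarith
      qed
      show "I (Suc k)" unfolding I_def e using cM pM le by blast
    qed
  qed
  have main: "feasD n T A W \<Sigma>0 Cs Vs P' Q' Qp' R C V"
    unfolding feasD_def
  proof (intro conjI allI impI)
    show "is_inv n (Qp' 0) \<Sigma>0" unfolding Qp'_def using q0 by simp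
    fix t assume t: "t \<le> T"
    have It: "I t" using inv t by blast
    note dt = derived[OF t It]
    show "P' t \<in> carrier_mat n n" "Q' t \<in> carrier_mat n n" "Qp' t \<in> carrier_mat n n" "R t \<in> carrier_mat n n"
      using dt It Rp[OF t] unfolding I_def by blast+
    show "is_inv n (P' t) (Q' t)" using is_inv_swap dt by blast
    show "Q' t = Qp' t + R t" by (rule Q'_def)
    show "R t = (C t)\<^sup>T * minv (V t) * C t" "C t \<in> Cs t" "V t \<in> Vs t" using CV[OF t] by blast+
    assume t1: "1 \<le> t"
    then obtain k where tk: "t = Suc k" by (cases t) auto
    have "is_inv n (A k * P' k * (A k)\<^sup>T + W) (Qp' (Suc k))"
    proof -
      have kT: "k \<le> T" using t tk by simp
      note dk = derived[OF kT inv[rule_format, OF kT]]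
      have Ak: "A k \<in> carrier_mat n n" using A_dim kT by auto
      have pP: "\<And>x. x \<in> carrier_vec n \<Longrightarrow> 0 \<le> x \<bullet> (P' k *\<^sub>v x)" using dk by blast
      have cP: "P' k \<in> carrier_mat n n" and sP: "(P' k)\<^sup>T = P' k" using dk by blast+
      note hp = h_props[OF Ak cP sP pP W_dim W_pd]
      obtain Mi where iM: "is_inv n (A k * P' k * (A k)\<^sup>T + W) Mi" using pd_is_inv[OF hp(1) hp(3)] by blast
      have e: "Qp' (Suc k) = Mi" unfolding Qp'_def using minv_eq[OF iM] unfolding P'_def Q'_def Qp'_def by simp
      show ?thesis using iM e by simp
    qed
    then show "is_inv n (Qp' t) (hmap A W t (P' (t - 1)))" unfolding hmap_def tk using is_inv_swap by simp
  qed
  have bounds: "(\<forall>x\<in>carrier_vec n. x \<bullet> (Q t *\<^sub>v x) \<le> x \<bullet> (Q' t *\<^sub>v x)) \<and>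
              (\<forall>x\<in>carrier_vec n. x \<bullet> (P' t *\<^sub>v x) \<le> x \<bullet> (P t *\<^sub>v x))" if t: "t \<le> T" for t
  proof (intro conjI ballI)
    have It: "I t" using inv t by blast
    note dt = derived[OF t It]
    show "x \<bullet> (Q t *\<^sub>v x) \<le> x \<bullet> (Q' t *\<^sub>v x)" if "x \<in> carrier_vec n" for x using It that unfolding I_def by blast
    fix x :: "real vec" assume x: "x \<in> carrier_vec n"
    have frt: "P t \<in> carrier_mat n n" "Q t \<in> carrier_mat n n" "psd (four_block_mat (P t) (1\<^sub>m n) (1\<^sub>m n) (Q t))"
      using fr t by auto
    have iQ: "is_inv n (Q' t) (P' t)" and sQ: "(Q' t)\<^sup>T = Q' t" and cP: "P' t \<in> carrier_mat n n" using dt by blast+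
    define u where "u = P' t *\<^sub>v x"
    have u: "u \<in> carrier_vec n" using u_def cP x by simp
    have mu: "- u \<in> carrier_vec n" using u by simp
    have "0 \<le> x \<bullet> (P t *\<^sub>v x + 1\<^sub>m n *\<^sub>v (- u)) + (- u) \<bullet> (1\<^sub>m n *\<^sub>v x + Q t *\<^sub>v (- u))"
      by (rule psd_block_use(3)[OF frt(1) one_carrier_mat one_carrier_mat frt(2) frt(3) x mu])
    then have l1: "0 \<le> x \<bullet> (P t *\<^sub>v x) + 2 * (x \<bullet> (- u)) + (- u) \<bullet> (Q t *\<^sub>v (- u))"
      unfolding lmi1_form[OF frt(1,2) x mu] .
    have e1: "x \<bullet> (- u) = - (x \<bullet> u)" using x u by simp
    have e2: "(- u) \<bullet> (Q t *\<^sub>v (- u)) = u \<bullet> (Q t *\<^sub>v u)" using mult_uminus_vec[OF frt(2) u] u frt(2) by simp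
    have l2: "u \<bullet> (Q t *\<^sub>v u) \<le> u \<bullet> (Q' t *\<^sub>v u)" using It u unfolding I_def by blast
    have e3: "u \<bullet> (Q' t *\<^sub>v u) = x \<bullet> (P' t *\<^sub>v x)" using quad_inv[OF iQ sQ x] u_def by simp
    have e4: "x \<bullet> u = x \<bullet> (P' t *\<^sub>v x)" using u_def by simp
    show "x \<bullet> (P' t *\<^sub>v x) \<le> x \<bullet> (P t *\<^sub>v x)" using l1 e1 e2 l2 e3 e4 by linarith
  qed
  show ?thesis using main bounds by blast
qed

lemma entry_form: fixes X :: "real mat" assumes X: "X \<in> carrier_mat n n" and i: "i < n" and j: "j < n"
  shows "unit_vec n i \<bullet> (X *\<^sub>v unit_vec n j) = X $$ (i, j)"
proof -
  have "unit_vec n i \<bullet> (X *\<^sub>v unit_vec n j) = (X *\<^sub>v unit_vec n j) $ i"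
    by (rule scalar_prod_left_unit) (use X i in auto)
  also have "\<dots> = row X i \<bullet> unit_vec n j" using X i by simp
  also have "\<dots> = row X i $ j" using j by simp
  also have "\<dots> = X $$ (i, j)" using X i j by simp
  finally show ?thesis .
qed

lemma trace_mono: fixes X :: "real mat" assumes X: "X \<in> carrier_mat n n" and Y: "Y \<in> carrier_mat n n"
  and le: "\<And>x. x \<in> carrier_vec n \<Longrightarrow> x \<bullet> (X *\<^sub>v x) \<le> x \<bullet> (Y *\<^sub>v x)"
  shows "mtrace X \<le> mtrace Y"
proof -
  have h: "X $$ (i, i) \<le> Y $$ (i, i)" if i: "i < n" for i
    using le[of "unit_vec n i"] entry_form[OF X i i] entry_form[OF Y i i] by simp
  have dr: "dim_row X = n" "dim_row Y = n" using X Y by auto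
  show ?thesis unfolding mtrace_def dr by (rule sum_mono) (use h in auto)
qed

lemma eq_from_forms: fixes X :: "real mat" assumes X: "X \<in> carrier_mat n n" and Y: "Y \<in> carrier_mat n n"
  and sX: "X\<^sup>T = X" and sY: "Y\<^sup>T = Y"
  and le: "\<And>x. x \<in> carrier_vec n \<Longrightarrow> x \<bullet> (X *\<^sub>v x) \<le> x \<bullet> (Y *\<^sub>v x)"
  and tr: "mtrace X = mtrace Y"
  shows "X = Y"
proof -
  define D where "D = Y - X"
  have D: "D \<in> carrier_mat n n" using D_def minus_carrier_mat[OF X] by simp
  have sD: "D\<^sup>T = D" using transpose_minus[OF Y X] sX sY D_def by simp
  have fD: "x \<bullet> (D *\<^sub>v x) = x \<bullet> (Y *\<^sub>v x) - x \<bullet> (X *\<^sub>v x)" if x: "x \<in> carrier_vec n" for x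
    unfolding D_def using X Y x by (simp add: minus_mult_distrib_mat_vec[of _ n n] scalar_prod_minus_distrib[of _ n])
  have pD: "0 \<le> x \<bullet> (D *\<^sub>v x)" if x: "x \<in> carrier_vec n" for x using fD[OF x] le[OF x] by simp
  have dD: "D $$ (i, i) = Y $$ (i, i) - X $$ (i, i)" if "i < n" for i using that X Y D_def by simp
  have dnn: "0 \<le> D $$ (i, i)" if i: "i < n" for i using pD[of "unit_vec n i"] entry_form[OF D i i] by simp
  have "(\<Sum>i<n. D $$ (i, i)) = (\<Sum>i<n. Y $$ (i, i)) - (\<Sum>i<n. X $$ (i, i))"
    using dD by (simp add: sum_subtractf)
  also have "\<dots> = 0" using tr X Y unfolding mtrace_def by simp
  finally have "(\<Sum>i<n. D $$ (i, i)) = 0" .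
  then have d0: "D $$ (i, i) = 0" if "i < n" for i
    using sum_nonneg_eq_0_iff[of "{..<n}" "\<lambda>i. D $$ (i, i)"] dnn that by auto
  have z: "D $$ (i, j) = 0" if i: "i < n" and j: "j < n" for i j
  proof -
    let ?a = "unit_vec n i" and ?b = "unit_vec n j"
    have a: "?a \<in> carrier_vec n" and b: "?b \<in> carrier_vec n" by simp_all
    have 1: "0 \<le> (?a + ?b) \<bullet> (D *\<^sub>v (?a + ?b))" using pD a b by simp
    have 2: "0 \<le> (?a - ?b) \<bullet> (D *\<^sub>v (?a - ?b))" using pD a b by simp
    have e: "?a \<bullet> (D *\<^sub>v ?a) = 0" "?b \<bullet> (D *\<^sub>v ?b) = 0" "?a \<bullet> (D *\<^sub>v ?b) = D $$ (i, j)"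
      using entry_form[OF D] d0 i j by auto
    show ?thesis using 1 2 quad_add[OF D sD a b] quad_sub[OF D sD a b] e by simp
  qed
  show ?thesis
  proof (rule eq_matI)
    fix i j assume ij: "i < dim_row Y" "j < dim_col Y"
    then have "D $$ (i, j) = Y $$ (i, j) - X $$ (i, j)" using X Y D_def by simp
    then show "X $$ (i, j) = Y $$ (i, j)" using z[of i j] ij Y by simp
  qed (use X Y in auto)
qed

lemma feasD_t: assumes "feasD n T A W S Cs Vs P Q Qp R C V" "t \<le> T"
  shows "P t \<in> carrier_mat n n" "Q t \<in> carrier_mat n n" "Qp t \<in> carrier_mat n n" "R t \<in> carrier_mat n n"
    "is_inv n (P t) (Q t)" "Q t = Qp t + R t"
  using assms unfolding feasD_def by blast+

lemma feasR_t: assumes "feasR n T A W S Cs Vs P Q Qp R" "t \<le> T"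
  shows "P t \<in> carrier_mat n n" "Q t \<in> carrier_mat n n" "Qp t \<in> carrier_mat n n" "R t \<in> carrier_mat n n"
    "Q t = Qp t + R t" "psd (four_block_mat (P t) (1\<^sub>m n) (1\<^sub>m n) (Q t))"
  using assms unfolding feasR_def by blast+

lemma feasD_cong: assumes eq: "\<forall>t\<le>T. P t = P' t \<and> Q t = Q' t \<and> Qp t = Qp' t"
  and f: "feasD n T A W S Cs Vs P' Q' Qp' R C V"
  shows "feasD n T A W S Cs Vs P Q Qp R C V"
proof -
  have f1: "\<forall>t\<le>T. P' t \<in> carrier_mat n n \<and> Q' t \<in> carrier_mat n n \<and> Qp' t \<in> carrier_mat n n
         \<and> R t \<in> carrier_mat n n
         \<and> is_inv n (P' t) (Q' t)
         \<and> Q' t = Qp' t + R t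
         \<and> (1 \<le> t \<longrightarrow> is_inv n (Qp' t) (hmap A W t (P' (t - 1))))
         \<and> R t = (C t)\<^sup>T * minv (V t) * C t
         \<and> C t \<in> Cs t \<and> V t \<in> Vs t" using f unfolding feasD_def by (rule conjunct1)
  have f2: "is_inv n (Qp' 0) S" using f unfolding feasD_def by (rule conjunct2)
  have g: "\<forall>t\<le>T. P t \<in> carrier_mat n n \<and> Q t \<in> carrier_mat n n \<and> Qp t \<in> carrier_mat n n
         \<and> R t \<in> carrier_mat n n
         \<and> is_inv n (P t) (Q t)
         \<and> Q t = Qp t + R t
         \<and> (1 \<le> t \<longrightarrow> is_inv n (Qp t) (hmap A W t (P (t - 1))))
         \<and> R t = (C t)\<^sup>T * minv (V t) * C t
         \<and> C t \<in> Cs t \<and> V t \<in> Vs t"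
  proof (intro allI impI)
    fix t assume t: "t \<le> T"
    have e: "P t = P' t" "Q t = Q' t" "Qp t = Qp' t" using eq t by auto
    have e1: "P (t - 1) = P' (t - 1)" using eq t by auto
    show "P t \<in> carrier_mat n n \<and> Q t \<in> carrier_mat n n \<and> Qp t \<in> carrier_mat n n
         \<and> R t \<in> carrier_mat n n
         \<and> is_inv n (P t) (Q t)
         \<and> Q t = Qp t + R t
         \<and> (1 \<le> t \<longrightarrow> is_inv n (Qp t) (hmap A W t (P (t - 1))))
         \<and> R t = (C t)\<^sup>T * minv (V t) * C t
         \<and> C t \<in> Cs t \<and> V t \<in> Vs t" unfolding e e1 using f1 t by blast
  qed
  have "Qp 0 = Qp' 0" using eq by auto
  then have "is_inv n (Qp 0) S" using f2 by simp
  then show ?thesis unfolding feasD_def using g by (intro conjI)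
qed

lemma cost_mono: assumes "\<forall>t\<le>T. mtrace (P t) \<le> mtrace (P' t)" shows "cost T P \<le> cost T P'"
  unfolding cost_def by (rule sum_mono) (use assms in auto)

theorem theorem2:
  fixes n T :: nat and A :: "nat \<Rightarrow> real mat" and W \<Sigma>0 :: "real mat"
    and Cs Vs :: "nat \<Rightarrow> real mat set" and m :: "nat \<Rightarrow> nat"
  assumes A_dim: "\<forall>t\<le>T. A t \<in> carrier_mat n n"
    and W_dim: "W \<in> carrier_mat n n" and W_pd: "pd W"
    and S_dim: "\<Sigma>0 \<in> carrier_mat n n" and S_pd: "pd \<Sigma>0"
    and C_dim: "\<forall>t\<le>T. Cs t \<subseteq> carrier_mat (m t) n"
    and V_dim: "\<forall>t\<le>T. Vs t \<subseteq> carrier_mat (m t) (m t)"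
    and V_pd: "\<forall>t\<le>T. \<forall>V\<in>Vs t. pd V"
  shows "(\<forall>P Q Qp R. optR n T A W \<Sigma>0 Cs Vs P Q Qp R \<longrightarrow>
            (\<exists>C V. optD n T A W \<Sigma>0 Cs Vs P Q Qp R C V))
       \<and> (\<forall>P Q Qp R C V. optD n T A W \<Sigma>0 Cs Vs P Q Qp R C V \<longrightarrow>
            optR n T A W \<Sigma>0 Cs Vs P Q Qp R)"
proof (intro conjI allI impI)
  note DR = D_to_R[OF A_dim W_dim W_pd S_dim S_pd C_dim V_dim V_pd]
  note RD = R_to_D[OF A_dim W_dim W_pd S_dim S_pd C_dim V_dim V_pd]
  fix P Q Qp R C V
  assume oD: "optD n T A W \<Sigma>0 Cs Vs P Q Qp R C V"
  have fD: "feasD n T A W \<Sigma>0 Cs Vs P Q Qp R C V" using oD unfolding optD_def by blast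
  have minD: "\<And>P' Q' Qp' R' C' V'. feasD n T A W \<Sigma>0 Cs Vs P' Q' Qp' R' C' V' \<Longrightarrow> cost T P \<le> cost T P'"
    using oD unfolding optD_def by blast
  show "optR n T A W \<Sigma>0 Cs Vs P Q Qp R" unfolding optR_def
  proof (intro conjI allI impI)
    show "feasR n T A W \<Sigma>0 Cs Vs P Q Qp R" by (rule DR[OF fD])
    fix P2 Q2 Qp2 R2 assume f2: "feasR n T A W \<Sigma>0 Cs Vs P2 Q2 Qp2 R2"
    obtain P3 Q3 Qp3 C3 V3 where f3: "feasD n T A W \<Sigma>0 Cs Vs P3 Q3 Qp3 R2 C3 V3"
      and b3: "\<forall>t\<le>T. (\<forall>x\<in>carrier_vec n. x \<bullet> (Q2 t *\<^sub>v x) \<le> x \<bullet> (Q3 t *\<^sub>v x)) \<and>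
              (\<forall>x\<in>carrier_vec n. x \<bullet> (P3 t *\<^sub>v x) \<le> x \<bullet> (P2 t *\<^sub>v x))"
      using RD[OF f2] by blast
    have "\<forall>t\<le>T. mtrace (P3 t) \<le> mtrace (P2 t)"
    proof (intro allI impI)
      fix t assume t: "t \<le> T"
      show "mtrace (P3 t) \<le> mtrace (P2 t)"
        by (rule trace_mono[OF feasD_t(1)[OF f3 t] feasR_t(1)[OF f2 t]]) (use b3 t in blast)
    qed
    then have "cost T P3 \<le> cost T P2" by (rule cost_mono)
    moreover have "cost T P \<le> cost T P3" by (rule minD[OF f3])
    ultimately show "cost T P \<le> cost T P2" by linarith
  qed
next
  note DR = D_to_R[OF A_dim W_dim W_pd S_dim S_pd C_dim V_dim V_pd]
  note RD = R_to_D[OF A_dim W_dim W_pd S_dim S_pd C_dim V_dim V_pd]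
  fix P Q Qp R
  assume oR: "optR n T A W \<Sigma>0 Cs Vs P Q Qp R"
  have fR: "feasR n T A W \<Sigma>0 Cs Vs P Q Qp R" using oR unfolding optR_def by blast
  have minR: "\<And>P' Q' Qp' R'. feasR n T A W \<Sigma>0 Cs Vs P' Q' Qp' R' \<Longrightarrow> cost T P \<le> cost T P'"
    using oR unfolding optR_def by blast
  obtain P' Q' Qp' C V where f': "feasD n T A W \<Sigma>0 Cs Vs P' Q' Qp' R C V"
    and b': "\<forall>t\<le>T. (\<forall>x\<in>carrier_vec n. x \<bullet> (Q t *\<^sub>v x) \<le> x \<bullet> (Q' t *\<^sub>v x)) \<and>
              (\<forall>x\<in>carrier_vec n. x \<bullet> (P' t *\<^sub>v x) \<le> x \<bullet> (P t *\<^sub>v x))"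
    using RD[OF fR] by blast
  have fR': "feasR n T A W \<Sigma>0 Cs Vs P' Q' Qp' R" by (rule DR[OF f'])
  have c1: "cost T P \<le> cost T P'" by (rule minR[OF fR'])
  have trle: "mtrace (P' t) \<le> mtrace (P t)" if t: "t \<le> T" for t
    by (rule trace_mono[OF feasD_t(1)[OF f' t] feasR_t(1)[OF fR t]]) (use b' t in blast)
  have treq: "mtrace (P' t) = mtrace (P t)" if t: "t \<le> T" for t
  proof -
    have "(\<Sum>s\<le>T. mtrace (P s) - mtrace (P' s)) = cost T P - cost T P'"
      unfolding cost_def by (simp add: sum_subtractf)
    then have s0: "(\<Sum>s\<le>T. mtrace (P s) - mtrace (P' s)) = 0"
      using c1 cost_mono[of T P' P] trle by auto
    have "\<forall>s\<in>{..T}. mtrace (P s) - mtrace (P' s) = 0"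
      using sum_nonneg_eq_0_iff[of "{..T}" "\<lambda>s. mtrace (P s) - mtrace (P' s)"] s0 trle by auto
    then show ?thesis using t by auto
  qed
  have eqs: "\<forall>t\<le>T. P t = P' t \<and> Q t = Q' t \<and> Qp t = Qp' t"
  proof (intro allI impI)
    fix t assume t: "t \<le> T"
    note r = feasR_t[OF fR t] and r' = feasR_t[OF fR' t] and d' = feasD_t[OF f' t]
    have sP: "(P t)\<^sup>T = P t" and sQ: "(Q t)\<^sup>T = Q t" using psd_block_use[OF r(1) one_carrier_mat one_carrier_mat r(2) r(6)] by blast+
    have sP': "(P' t)\<^sup>T = P' t" and sQ': "(Q' t)\<^sup>T = Q' t" using psd_block_use[OF r'(1) one_carrier_mat one_carrier_mat r'(2) r'(6)] by blast+
    have leP: "\<And>x. x \<in> carrier_vec n \<Longrightarrow> x \<bullet> (P' t *\<^sub>v x) \<le> x \<bullet> (P t *\<^sub>v x)" using b' t by blast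
    have leQ: "\<And>x. x \<in> carrier_vec n \<Longrightarrow> x \<bullet> (Q t *\<^sub>v x) \<le> x \<bullet> (Q' t *\<^sub>v x)" using b' t by blast
    have PP: "P' t = P t" by (rule eq_from_forms[OF d'(1) r(1) sP' sP leP treq[OF t]])
    have geQ: "z \<bullet> (Q' t *\<^sub>v z) \<le> z \<bullet> (Q t *\<^sub>v z)" if z: "z \<in> carrier_vec n" for z
    proof -
      define x where "x = Q' t *\<^sub>v z"
      have x: "x \<in> carrier_vec n" using x_def d'(2) z by simp
      have mz: "- z \<in> carrier_vec n" using z by simp
      have "0 \<le> x \<bullet> (P t *\<^sub>v x + 1\<^sub>m n *\<^sub>v (- z)) + (- z) \<bullet> (1\<^sub>m n *\<^sub>v x + Q t *\<^sub>v (- z))"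
        by (rule psd_block_use(3)[OF r(1) one_carrier_mat one_carrier_mat r(2) r(6) x mz])
      then have l1: "0 \<le> x \<bullet> (P t *\<^sub>v x) + 2 * (x \<bullet> (- z)) + (- z) \<bullet> (Q t *\<^sub>v (- z))"
        unfolding lmi1_form[OF r(1,2) x mz] .
      have Px: "P t *\<^sub>v x = z" unfolding x_def PP[symmetric]
        using d'(5) z unfolding is_inv_def by (metis assoc_mult_mat_vec one_mult_mat_vec)
      have e0: "x \<bullet> (- z) = - (x \<bullet> z)" by (rule scalar_prod_uminus_right) (use x z in auto)
      have e00: "x \<bullet> z = z \<bullet> (Q' t *\<^sub>v z)" unfolding x_def by (rule comm_scalar_prod[of _ n]) (use x z x_def in auto)
      have e1: "x \<bullet> (- z) = - (z \<bullet> (Q' t *\<^sub>v z))" using e0 e00 by simp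
      have e2: "(- z) \<bullet> (Q t *\<^sub>v (- z)) = z \<bullet> (Q t *\<^sub>v z)" using mult_uminus_vec[OF r(2) z] z r(2) by simp
      have e3: "x \<bullet> (P t *\<^sub>v x) = z \<bullet> (Q' t *\<^sub>v z)" unfolding Px using x z x_def by (simp add: comm_scalar_prod[of _ n])
      show ?thesis using l1 e1 e2 e3 by linarith
    qed
    have trQ: "mtrace (Q t) = mtrace (Q' t)"
      using trace_mono[OF r(2) d'(2) leQ] trace_mono[OF d'(2) r(2) geQ] by linarith
    have QQ: "Q t = Q' t" by (rule eq_from_forms[OF r(2) d'(2) sQ sQ' leQ trQ])
    have QpQp: "Qp t = Qp' t"
    proof (rule eq_matI)
      fix i j assume ij: "i < dim_row (Qp' t)" "j < dim_col (Qp' t)"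
      have "Q t $$ (i, j) = Q' t $$ (i, j)" using QQ by simp
      then show "Qp t $$ (i, j) = Qp' t $$ (i, j)" using ij r d' unfolding r(5) d'(6) by simp
    qed (use r d' in auto)
    show "P t = P' t \<and> Q t = Q' t \<and> Qp t = Qp' t" using PP QQ QpQp by simp
  qed
  show "\<exists>C V. optD n T A W \<Sigma>0 Cs Vs P Q Qp R C V"
  proof (intro exI)
    show "optD n T A W \<Sigma>0 Cs Vs P Q Qp R C V" unfolding optD_def
    proof (intro conjI allI impI)
      show "feasD n T A W \<Sigma>0 Cs Vs P Q Qp R C V" by (rule feasD_cong[OF eqs f'])
      fix P2 Q2 Qp2 R2 C2 V2 assume f2: "feasD n T A W \<Sigma>0 Cs Vs P2 Q2 Qp2 R2 C2 V2"
      show "cost T P \<le> cost T P2" by (rule minR[OF DR[OF f2]])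
    qed
  qed
qed

end
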